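(* With $R$, $I$, $\Gamma$, $\mathcal{C}$, $\mathcal{D}$ and $\Xi:\mathcal{C}\to\mathcal{D}$ as in the context, define $\Psi:\mathcal{D}\to\mathcal{C}$ as follows. For $\rho=(M_u,M_v,\psi_e,\psi_f)\in\mathcal{D}$, let $M=(S_1\otimes_{\mathbb{K}}M_u)\oplus M_v$ with $x((rf_1)\otimes m_u,m_v)=((xrf_1)\otimes m_u,\psi_f(m_v))$ and $y((rf_1)\otimes m_u,m_v)=((yrf_1)\otimes m_u+f_1\otimes\psi_e(m_v),\psi_f^{-1}(m_v))$, and let $\alpha$ be the inclusion of $M_v$ into $M$ (with $M/IM$ identified with $M_v$); set $\Psi(\rho)=(M,\alpha)$. For a morphism $\varphi=(\varphi_u,\varphi_v)$ in $\mathcal{D}$ set $\Psi(\varphi)=(\mathrm{id}_{S_1}\otimes\varphi_u)\oplus\varphi_v$. Then $\Psi$ is a functor $\mathcal{D}\to\mathcal{C}$, and $\Xi$ and $\Psi$ induce an equivalence of categories $\mathcal{C}\cong\mathcal{D}$.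
   Context: $\mathbb{K}$ is a field, $R=\mathbb{K}\langle x,y\rangle/(xy-1)$, $I=\langle1-yx\rangle$, $f_1=1-yx$, $S_1=Rf_1$. $\Gamma$ is the quiver with vertices $u,v$, an arrow $e:v\to u$ and a loop $f$ at $v$; a representation is $(M_u,M_v,\psi_e:M_v\to M_u,\psi_f:M_v\to M_v)$, and $\mathcal{D}$ is the full subcategory of representations with $\psi_f$ invertible. $\mathcal{C}$ is the category whose objects are weak splitting pairs $(M,\alpha)$: $M$ a left $R$-module and $\alpha:M/IM\to M$ a $\mathbb{K}[x]$-linear splitting of $M\to M/IM$; morphisms $(M,\alpha)\to(N,\beta)$ are $R$-linear $\varphi:M\to N$ with $\operatorname{im}(\varphi\circ\alpha)\subseteq\operatorname{im}\beta$. $\Xi(M,\alpha)=(M_0,\operatorname{im}\alpha,\psi_e,\psi_f)$, where $M_0=\{m\in M:xm=0\}$, $\psi_f$ is multiplication by $x$ on $\operatorname{im}\alpha$, and $\psi_e(m)=m_1$ where $ym=m_1+m_2$ with $m_1\in IM$, $m_2\in\operatorname{im}\alpha$; on morphisms $\Xi$ takes restrictions to $M_0$ and $\operatorname{im}\alpha$. *)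

theory Defs
  imports Main "HOL-Library.Function_Algebras" "HOL-Library.Product_Plus"
begin

definition kspace :: "('k::field \<Rightarrow> 'v::ab_group_add \<Rightarrow> 'v) \<Rightarrow> 'v set \<Rightarrow> bool" where
  "kspace s V \<longleftrightarrow> 0 \<in> V \<and> (\<forall>a\<in>V. \<forall>b\<in>V. a + b \<in> V) \<and> (\<forall>a\<in>V. - a \<in> V)
     \<and> (\<forall>c. \<forall>a\<in>V. s c a \<in> V)
     \<and> (\<forall>c. \<forall>a\<in>V. \<forall>b\<in>V. s c (a + b) = s c a + s c b)
     \<and> (\<forall>c d. \<forall>a\<in>V. s (c + d) a = s c a + s d a)
     \<and> (\<forall>c d. \<forall>a\<in>V. s c (s d a) = s (c * d) a)
     \<and> (\<forall>a\<in>V. s 1 a = a)"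

definition subsp :: "('k::field \<Rightarrow> 'v::ab_group_add \<Rightarrow> 'v) \<Rightarrow> 'v set \<Rightarrow> 'v set \<Rightarrow> bool" where
  "subsp s W V \<longleftrightarrow> W \<subseteq> V \<and> 0 \<in> W \<and> (\<forall>a\<in>W. \<forall>b\<in>W. a + b \<in> W) \<and> (\<forall>c. \<forall>a\<in>W. s c a \<in> W)"

definition klin :: "('k::field \<Rightarrow> 'a::ab_group_add \<Rightarrow> 'a) \<Rightarrow> ('k \<Rightarrow> 'b::ab_group_add \<Rightarrow> 'b)
    \<Rightarrow> 'a set \<Rightarrow> 'b set \<Rightarrow> ('a \<Rightarrow> 'b) \<Rightarrow> bool" where
  "klin s1 s2 V W f \<longleftrightarrow> f ` V \<subseteq> W \<and> (\<forall>a\<in>V. \<forall>b\<in>V. f (a + b) = f a + f b)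
     \<and> (\<forall>c. \<forall>a\<in>V. f (s1 c a) = s2 c (f a))"

text \<open>A left R-module is a K-vector space with K-linear operators x, y such that x(y m) = m.\<close>
record ('k, 'm) rmod =
  car :: "'m set"
  sc :: "'k \<Rightarrow> 'm \<Rightarrow> 'm"
  xo :: "'m \<Rightarrow> 'm"
  yo :: "'m \<Rightarrow> 'm"

definition is_rmod :: "('k::field, 'm::ab_group_add) rmod \<Rightarrow> bool" where
  "is_rmod M \<longleftrightarrow> kspace (sc M) (car M)
     \<and> klin (sc M) (sc M) (car M) (car M) (xo M)
     \<and> klin (sc M) (sc M) (car M) (car M) (yo M)
     \<and> (\<forall>m\<in>car M. xo M (yo M m) = m)"

definition rlin :: "('k::field, 'm::ab_group_add) rmod \<Rightarrow> ('k, 'n::ab_group_add) rmod \<Rightarrow> ('m \<Rightarrow> 'n) \<Rightarrow> bool" where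
  "rlin M N f \<longleftrightarrow> klin (sc M) (sc N) (car M) (car N) f
     \<and> (\<forall>m\<in>car M. f (xo M m) = xo N (f m) \<and> f (yo M m) = yo N (f m))"

text \<open>IM for the two-sided ideal I generated by f1 = 1 - yx: the R-submodule of M
  generated by f1 M = {m - y(x m)} (since I M = R f1 R M = R f1 M).\<close>
definition IM :: "('k::field, 'm::ab_group_add) rmod \<Rightarrow> 'm set" where
  "IM M = \<Inter>{N. subsp (sc M) N (car M) \<and> xo M ` N \<subseteq> N \<and> yo M ` N \<subseteq> N
              \<and> (\<lambda>m. m - yo M (xo M m)) ` car M \<subseteq> N}"

definition cos :: "'m::ab_group_add set \<Rightarrow> 'm \<Rightarrow> 'm set" where
  "cos N m = (\<lambda>n. m + n) ` N"

definition quot :: "('k::field, 'm::ab_group_add) rmod \<Rightarrow> 'm set set" where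
  "quot M = cos (IM M) ` car M"

definition imal :: "('k::field, 'm::ab_group_add) rmod \<Rightarrow> ('m set \<Rightarrow> 'm) \<Rightarrow> 'm set" where
  "imal M \<alpha> = \<alpha> ` quot M"

text \<open>alpha : M/IM -> M is a K[x]-linear splitting of the projection M -> M/IM
  (the quotient operations are induced by representatives).\<close>
type_synonym ('k, 'm) cob = "('k, 'm) rmod \<times> ('m set \<Rightarrow> 'm)"

definition wsp :: "('k::field, 'm::ab_group_add) rmod \<Rightarrow> ('m set \<Rightarrow> 'm) \<Rightarrow> bool" where
  "wsp M \<alpha> \<longleftrightarrow> is_rmod M
     \<and> (\<forall>m\<in>car M. \<alpha> (cos (IM M) m) \<in> car M \<and> \<alpha> (cos (IM M) m) - m \<in> IM M)
     \<and> (\<forall>m1\<in>car M. \<forall>m2\<in>car M.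
          \<alpha> (cos (IM M) (m1 + m2)) = \<alpha> (cos (IM M) m1) + \<alpha> (cos (IM M) m2))
     \<and> (\<forall>c. \<forall>m\<in>car M. \<alpha> (cos (IM M) (sc M c m)) = sc M c (\<alpha> (cos (IM M) m)))
     \<and> (\<forall>m\<in>car M. \<alpha> (cos (IM M) (xo M m)) = xo M (\<alpha> (cos (IM M) m)))"

definition cobj :: "('k::field, 'm::ab_group_add) rmod \<times> ('m set \<Rightarrow> 'm) \<Rightarrow> bool" where
  "cobj A \<longleftrightarrow> wsp (fst A) (snd A)"

definition cmor :: "('k::field, 'm::ab_group_add) rmod \<times> ('m set \<Rightarrow> 'm)
    \<Rightarrow> ('k, 'n::ab_group_add) rmod \<times> ('n set \<Rightarrow> 'n) \<Rightarrow> ('m \<Rightarrow> 'n) \<Rightarrow> bool" where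
  "cmor A B f \<longleftrightarrow> rlin (fst A) (fst B) f \<and> f ` imal (fst A) (snd A) \<subseteq> imal (fst B) (snd B)"

definition ciso :: "('k::field, 'm::ab_group_add) rmod \<times> ('m set \<Rightarrow> 'm)
    \<Rightarrow> ('k, 'n::ab_group_add) rmod \<times> ('n set \<Rightarrow> 'n) \<Rightarrow> ('m \<Rightarrow> 'n) \<Rightarrow> bool" where
  "ciso A B f \<longleftrightarrow> cmor A B f \<and> (\<exists>g. cmor B A g \<and> (\<forall>a\<in>car (fst A). g (f a) = a)
                                   \<and> (\<forall>b\<in>car (fst B). f (g b) = b))"

record ('k, 'u, 'v) rep =
  Mu :: "'u set"
  Mv :: "'v set"
  scu :: "'k \<Rightarrow> 'u \<Rightarrow> 'u"
  scv :: "'k \<Rightarrow> 'v \<Rightarrow> 'v"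
  pe :: "'v \<Rightarrow> 'u"
  pf :: "'v \<Rightarrow> 'v"

definition drep :: "('k::field, 'u::ab_group_add, 'v::ab_group_add) rep \<Rightarrow> bool" where
  "drep r \<longleftrightarrow> kspace (scu r) (Mu r) \<and> kspace (scv r) (Mv r)
     \<and> klin (scv r) (scu r) (Mv r) (Mu r) (pe r)
     \<and> klin (scv r) (scv r) (Mv r) (Mv r) (pf r)
     \<and> bij_betw (pf r) (Mv r) (Mv r)"

definition dmor :: "('k::field, 'u::ab_group_add, 'v::ab_group_add) rep
    \<Rightarrow> ('k, 'u2::ab_group_add, 'v2::ab_group_add) rep \<Rightarrow> ('u \<Rightarrow> 'u2) \<times> ('v \<Rightarrow> 'v2) \<Rightarrow> bool" where
  "dmor r s f \<longleftrightarrow> klin (scu r) (scu s) (Mu r) (Mu s) (fst f)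
     \<and> klin (scv r) (scv s) (Mv r) (Mv s) (snd f)
     \<and> (\<forall>v\<in>Mv r. fst f (pe r v) = pe s (snd f v) \<and> snd f (pf r v) = pf s (snd f v))"

definition diso :: "('k::field, 'u::ab_group_add, 'v::ab_group_add) rep
    \<Rightarrow> ('k, 'u2::ab_group_add, 'v2::ab_group_add) rep \<Rightarrow> ('u \<Rightarrow> 'u2) \<times> ('v \<Rightarrow> 'v2) \<Rightarrow> bool" where
  "diso r s f \<longleftrightarrow> dmor r s f \<and> (\<exists>g. dmor s r g
     \<and> (\<forall>a\<in>Mu r. fst g (fst f a) = a) \<and> (\<forall>a\<in>Mv r. snd g (snd f a) = a)
     \<and> (\<forall>b\<in>Mu s. fst f (fst g b) = b) \<and> (\<forall>b\<in>Mv s. snd f (snd g b) = b))"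

definition Xi :: "('k::field, 'm::ab_group_add) rmod \<times> ('m set \<Rightarrow> 'm) \<Rightarrow> ('k, 'm, 'm) rep" where
  "Xi A = (case A of (M, \<alpha>) \<Rightarrow>
     \<lparr> Mu = {m \<in> car M. xo M m = 0},
       Mv = imal M \<alpha>,
       scu = sc M, scv = sc M,
       pe = (\<lambda>m. THE m1. m1 \<in> IM M \<and> yo M m - m1 \<in> imal M \<alpha>),
       pf = xo M \<rparr>)"

definition XiM :: "('m \<Rightarrow> 'n) \<Rightarrow> ('m \<Rightarrow> 'n) \<times> ('m \<Rightarrow> 'n)" where
  "XiM f = (f, f)"

text \<open>S1 = R f1 has K-basis y^a f1 (a in nat), so S1 (x)_K Mu is modelled as the finitely
  supported sequences g : nat -> Mu, g a being the coefficient of y^a f1.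
  Then x (y^a f1) = y^(a-1) f1 (a >= 1), x f1 = 0, y (y^a f1) = y^(a+1) f1.\<close>
definition Psi_mod :: "('k::field, 'u::ab_group_add, 'v::ab_group_add) rep \<Rightarrow> ('k, (nat \<Rightarrow> 'u) \<times> 'v) rmod" where
  "Psi_mod r =
     \<lparr> car = {(g, v). (\<forall>a. g a \<in> Mu r) \<and> finite {a. g a \<noteq> 0} \<and> v \<in> Mv r},
       sc = (\<lambda>c (g, v). (\<lambda>a. scu r c (g a), scv r c v)),
       xo = (\<lambda>(g, v). (\<lambda>a. g (Suc a), pf r v)),
       yo = (\<lambda>(g, v). (\<lambda>a. if a = 0 then pe r v else g (a - 1), the_inv_into (Mv r) (pf r) v)) \<rparr>"

text \<open>alpha: inclusion of Mv, with M/IM identified with Mv (a class is sent to (0, its Mv-component))\<close>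
definition Psi_alpha :: "((nat \<Rightarrow> 'u::ab_group_add) \<times> 'v) set \<Rightarrow> (nat \<Rightarrow> 'u) \<times> 'v" where
  "Psi_alpha c = (0, snd (SOME p. p \<in> c))"

definition Psi :: "('k::field, 'u::ab_group_add, 'v::ab_group_add) rep
    \<Rightarrow> ('k, (nat \<Rightarrow> 'u) \<times> 'v) rmod \<times> (((nat \<Rightarrow> 'u) \<times> 'v) set \<Rightarrow> (nat \<Rightarrow> 'u) \<times> 'v)" where
  "Psi r = (Psi_mod r, Psi_alpha)"

definition PsiM :: "('u \<Rightarrow> 'u2) \<times> ('v \<Rightarrow> 'v2) \<Rightarrow> (nat \<Rightarrow> 'u) \<times> 'v \<Rightarrow> (nat \<Rightarrow> 'u2) \<times> 'v2" where
  "PsiM f = (\<lambda>(g, v). (fst f \<circ> g, snd f v))"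

end

theory Submission
  imports Defs
begin


definition grp :: "'v::ab_group_add set \<Rightarrow> bool" where
  "grp V \<longleftrightarrow> 0\<in>V \<and> (\<forall>a\<in>V. \<forall>b\<in>V. a+b\<in>V) \<and> (\<forall>a\<in>V. -a\<in>V)"
definition addh :: "'a::ab_group_add set \<Rightarrow> ('a \<Rightarrow> 'b::ab_group_add) \<Rightarrow> bool" where
  "addh V f \<longleftrightarrow> (\<forall>a\<in>V. \<forall>b\<in>V. f(a+b) = f a + f b)"

lemma grpD: assumes "grp V" shows "0\<in>V" "a\<in>V \<Longrightarrow> b\<in>V \<Longrightarrow> a+b\<in>V" "a\<in>V \<Longrightarrow> -a\<in>V"
  "a\<in>V \<Longrightarrow> b\<in>V \<Longrightarrow> a-b\<in>V"
proof -
  show 0: "0\<in>V" "a\<in>V \<Longrightarrow> b\<in>V \<Longrightarrow> a+b\<in>V" "a\<in>V \<Longrightarrow> -a\<in>V" for a b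
    using assms unfolding grp_def by blast+
  show "a-b\<in>V" if ab: "a\<in>V" "b\<in>V" for a b
  proof -
    have "a + -b \<in> V" using 0(2)[OF ab(1) 0(3)[OF ab(2)]] .
    then show ?thesis unfolding diff_conv_add_uminus .
  qed
qed

lemma grp_sum: assumes "grp V" "\<And>i. i\<in>S \<Longrightarrow> h i \<in> V" shows "sum h S \<in> V"
proof (cases "finite S")
  case True then show ?thesis using assms(2)
  proof (induction S rule: finite_induct)
    case empty then show ?case using grpD(1)[OF assms(1)] by simp
  next
    case (insert x F)
    then have "h x \<in> V" "sum h F \<in> V" by auto
    moreover have "sum h (insert x F) = h x + sum h F" using insert(1,2) by simp
    ultimately show ?case using grpD(2)[OF assms(1), of "h x" "sum h F"] by simp
  qed
qed (simp add: grpD(1)[OF assms(1)])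

lemma addh0: assumes "grp V" "addh V f" shows "f 0 = 0"
proof -
  have z: "0 \<in> V" using assms(1) unfolding grp_def by simp
  have "f (0+0) = f 0 + f 0" using bspec[OF bspec[OF assms(2)[unfolded addh_def] z] z] .
  then show ?thesis by simp
qed

lemma addhD: assumes "grp V" "addh V f" shows "a\<in>V \<Longrightarrow> b\<in>V \<Longrightarrow> f(a+b) = f a + f b"
  "a\<in>V \<Longrightarrow> f (-a) = - f a" "a\<in>V \<Longrightarrow> b\<in>V \<Longrightarrow> f(a-b) = f a - f b"
proof -
  show 1: "a\<in>V \<Longrightarrow> b\<in>V \<Longrightarrow> f(a+b) = f a + f b" for a b using assms(2) unfolding addh_def by blast
  show 2: "a\<in>V \<Longrightarrow> f (-a) = - f a" for a
  proof -
    assume a: "a\<in>V"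
    have "f (a + -a) = f a + f (-a)" using 1 a grpD[OF assms(1)] by blast
    then have "f a + f (-a) = 0" using addh0[OF assms] by simp
    then show ?thesis by (rule minus_unique[symmetric])
  qed
  show "f(a-b) = f a - f b" if ab: "a\<in>V" "b\<in>V" for a b
  proof -
    have "-b \<in> V" using grpD(3)[OF assms(1) ab(2)] .
    then have "f (a + -b) = f a + f (-b)" using 1 ab(1) by blast
    then show ?thesis using 2[OF ab(2)] by simp
  qed
qed

lemma addh_sum: assumes "grp V" "addh V f" "\<And>i. i\<in>S \<Longrightarrow> h i \<in> V"
  shows "f (sum h S) = (\<Sum>i\<in>S. f (h i))"
proof (cases "finite S")
  case True then show ?thesis using assms(3)
  proof (induction S rule: finite_induct)
    case empty then show ?case using addh0[OF assms(1,2)] by simp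
  next
    case (insert x F)
    have hF: "sum h F \<in> V" using grp_sum[OF assms(1), of F h] insert.prems by auto
    have hx: "h x \<in> V" using insert.prems by auto
    have IH: "f (sum h F) = (\<Sum>i\<in>F. f (h i))" using insert.IH insert.prems by auto
    have "f (sum h (insert x F)) = f (h x + sum h F)" using insert(1,2) by simp
    also have "\<dots> = f (h x) + f (sum h F)" using addhD(1)[OF assms(1,2) hx hF] .
    finally show ?case using IH insert(1,2) by simp
  qed
qed (simp add: addh0[OF assms(1,2)])

lemma addh_comp: assumes "addh V f" "addh W g" "f ` V \<subseteq> W" shows "addh V (g \<circ> f)"
  unfolding addh_def
proof (intro ballI)
  fix a b assume ab: "a\<in>V" "b\<in>V"
  then have "f a \<in> W" "f b \<in> W" using assms(3) by auto
  moreover have "f (a+b) = f a + f b" using assms(1) ab unfolding addh_def by blast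
  ultimately show "(g \<circ> f) (a + b) = (g \<circ> f) a + (g \<circ> f) b" using assms(2) unfolding addh_def by simp
qed

lemma addh_funpow: assumes "addh V f" "f ` V \<subseteq> V" shows "addh V (f^^n)" "(f^^n) ` V \<subseteq> V"
proof -
  have "addh V (f^^n) \<and> (f^^n) ` V \<subseteq> V"
  proof (induction n)
    case 0 then show ?case by (simp add: addh_def)
  next
    case (Suc n)
    then have h1: "addh V (f^^n)" and h2: "(f^^n) ` V \<subseteq> V" by blast+
    have "addh V (f \<circ> (f^^n))" using addh_comp[OF h1 assms(1) h2] .
    moreover have "(f \<circ> (f^^n)) ` V \<subseteq> V"
      using h2 assms(2) unfolding image_subset_iff by simp
    ultimately show ?case by (simp add: comp_def)
  qed
  then show "addh V (f^^n)" "(f^^n) ` V \<subseteq> V" by auto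
qed

lemma kspace_grp: "kspace s V \<Longrightarrow> grp V"
  unfolding kspace_def grp_def by blast
lemma klin_addh: "klin s1 s2 V W f \<Longrightarrow> addh V f"
  unfolding klin_def addh_def by blast

lemma kspace_sub: assumes "kspace s V" "W \<subseteq> V" "grp W" "\<And>c a. a\<in>W \<Longrightarrow> s c a \<in> W"
  shows "kspace s W"
proof -
  have V: "\<And>x. x\<in>W \<Longrightarrow> x \<in> V" using assms(2) by blast
  have g: "0 \<in> W" "\<And>a b. a\<in>W \<Longrightarrow> b\<in>W \<Longrightarrow> a+b\<in>W" "\<And>a. a\<in>W \<Longrightarrow> -a\<in>W"
    using assms(3) unfolding grp_def by auto
  have k: "\<And>c a b. a\<in>V \<Longrightarrow> b\<in>V \<Longrightarrow> s c (a + b) = s c a + s c b"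
    "\<And>c d a. a\<in>V \<Longrightarrow> s (c + d) a = s c a + s d a"
    "\<And>c d a. a\<in>V \<Longrightarrow> s c (s d a) = s (c * d) a"
    "\<And>a. a\<in>V \<Longrightarrow> s 1 a = a"
    using assms(1) unfolding kspace_def by blast+
  show ?thesis unfolding kspace_def
    by (intro conjI ballI allI; simp add: g assms(4) k V)
qed

lemma kspace_sc0: assumes "kspace s V" shows "s c 0 = 0"
proof -
  have "addh V (s c)" using assms(1) unfolding kspace_def addh_def by blast
  then show ?thesis using addh0 kspace_grp[OF assms] by blast
qed

lemma kspace_sc_diff: assumes "kspace s V" "a\<in>V" "b\<in>V" shows "s c (a - b) = s c a - s c b"
proof -
  have "addh V (s c)" using assms(1) unfolding kspace_def addh_def by blast
  from addhD(3)[OF kspace_grp[OF assms(1)] this assms(2,3)] show ?thesis .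
qed



lemma rmod_grp: "is_rmod M \<Longrightarrow> grp (car M)"
  unfolding is_rmod_def using kspace_grp by blast
lemma rmod_ks: "is_rmod M \<Longrightarrow> kspace (sc M) (car M)"
  unfolding is_rmod_def by blast
lemma rmod_xlin: "is_rmod M \<Longrightarrow> klin (sc M) (sc M) (car M) (car M) (xo M)"
  unfolding is_rmod_def by blast
lemma rmod_ylin: "is_rmod M \<Longrightarrow> klin (sc M) (sc M) (car M) (car M) (yo M)"
  unfolding is_rmod_def by blast
lemma rmod_xy: "is_rmod M \<Longrightarrow> m \<in> car M \<Longrightarrow> xo M (yo M m) = m"
  unfolding is_rmod_def by blast
lemma rmod_addhx: "is_rmod M \<Longrightarrow> addh (car M) (xo M)"
  using rmod_xlin klin_addh by blast
lemma rmod_addhy: "is_rmod M \<Longrightarrow> addh (car M) (yo M)"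
  using rmod_ylin klin_addh by blast
lemma rmod_ximg: "is_rmod M \<Longrightarrow> xo M ` car M \<subseteq> car M"
  using rmod_xlin unfolding klin_def by blast
lemma rmod_yimg: "is_rmod M \<Longrightarrow> yo M ` car M \<subseteq> car M"
  using rmod_ylin unfolding klin_def by blast
lemma rmod_xc: "is_rmod M \<Longrightarrow> m \<in> car M \<Longrightarrow> xo M m \<in> car M"
  using rmod_ximg by blast
lemma rmod_yc: "is_rmod M \<Longrightarrow> m \<in> car M \<Longrightarrow> yo M m \<in> car M"
  using rmod_yimg by blast
lemma rmod_xsc: "is_rmod M \<Longrightarrow> m \<in> car M \<Longrightarrow> xo M (sc M c m) = sc M c (xo M m)"
  using rmod_xlin unfolding klin_def by blast
lemma rmod_ysc: "is_rmod M \<Longrightarrow> m \<in> car M \<Longrightarrow> yo M (sc M c m) = sc M c (yo M m)"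
  using rmod_ylin unfolding klin_def by blast

lemma rmod_xpow: assumes "is_rmod M"
  shows "addh (car M) (xo M ^^ n)" "m \<in> car M \<Longrightarrow> (xo M ^^ n) m \<in> car M"
  using addh_funpow[OF rmod_addhx[OF assms] rmod_ximg[OF assms]] by blast+
lemma rmod_ypow: assumes "is_rmod M"
  shows "addh (car M) (yo M ^^ n)" "m \<in> car M \<Longrightarrow> (yo M ^^ n) m \<in> car M"
  using addh_funpow[OF rmod_addhy[OF assms] rmod_yimg[OF assms]] by blast+

lemma rmod_xpow0: "is_rmod M \<Longrightarrow> (xo M ^^ n) 0 = 0"
  using addh0[OF rmod_grp rmod_xpow(1)] by blast
lemma rmod_ypow0: "is_rmod M \<Longrightarrow> (yo M ^^ n) 0 = 0"
  using addh0[OF rmod_grp rmod_ypow(1)] by blast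

lemma rmod_xpow_sc: assumes "is_rmod M" shows "m \<in> car M \<Longrightarrow> (xo M ^^ n) (sc M c m) = sc M c ((xo M ^^ n) m)"
proof (induction n)
  case (Suc n)
  then show ?case using rmod_xsc[OF assms rmod_xpow(2)[OF assms]] by simp
qed simp
lemma rmod_ypow_sc: assumes "is_rmod M" shows "m \<in> car M \<Longrightarrow> (yo M ^^ n) (sc M c m) = sc M c ((yo M ^^ n) m)"
proof (induction n)
  case (Suc n)
  then show ?case using rmod_ysc[OF assms rmod_ypow(2)[OF assms]] by simp
qed simp

lemma rmod_xpyp: assumes "is_rmod M" "w \<in> car M"
  shows "(xo M ^^ b) ((yo M ^^ (b + c)) w) = (yo M ^^ c) w"
proof (induction b)
  case 0 then show ?case by simp
next
  case (Suc b)
  have e1: "(xo M ^^ Suc b) u = (xo M ^^ b) (xo M u)" for u by (simp add: funpow_swap1)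
  have e2: "(yo M ^^ (Suc b + c)) w = yo M ((yo M ^^ (b + c)) w)" by simp
  have "(xo M ^^ Suc b) ((yo M ^^ (Suc b + c)) w) = (xo M ^^ b) (xo M (yo M ((yo M ^^ (b + c)) w)))"
    unfolding e1 e2 ..
  also have "\<dots> = (xo M ^^ b) ((yo M ^^ (b + c)) w)"
    using rmod_xy[OF assms(1) rmod_ypow(2)[OF assms]] by simp
  finally show ?case using Suc by simp
qed

lemma rmod_xpyp_le: assumes "is_rmod M" "w \<in> car M" "b \<le> a"
  shows "(xo M ^^ b) ((yo M ^^ a) w) = (yo M ^^ (a - b)) w"
  using rmod_xpyp[OF assms(1,2), of b "a - b"] assms(3) by simp

lemma rmod_xpyp_gt: assumes "is_rmod M" "w \<in> car M" "a < b"
  shows "(xo M ^^ b) ((yo M ^^ a) w) = (xo M ^^ (b - a)) w"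
proof -
  have "(xo M ^^ b) = (xo M ^^ (b - a)) \<circ> (xo M ^^ a)"
    using assms(3) funpow_add[of "b - a" a "xo M"] by simp
  then show ?thesis using rmod_xpyp[OF assms(1,2), of a 0] by simp
qed

definition nil :: "('k::field, 'm::ab_group_add) rmod \<Rightarrow> 'm set" where
  "nil M = {n \<in> car M. \<exists>N. (xo M ^^ N) n = 0}"

definition F1 :: "('k::field, 'm::ab_group_add) rmod \<Rightarrow> 'm \<Rightarrow> 'm" where
  "F1 M z = z - yo M (xo M z)"

lemma F1_car: "is_rmod M \<Longrightarrow> z \<in> car M \<Longrightarrow> F1 M z \<in> car M"
  unfolding F1_def using grpD(4)[OF rmod_grp] rmod_xc rmod_yc by blast
lemma F1_x: assumes "is_rmod M" "z \<in> car M" shows "xo M (F1 M z) = 0"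
proof -
  have "xo M (F1 M z) = xo M z - xo M (yo M (xo M z))"
    unfolding F1_def using addhD(3)[OF rmod_grp[OF assms(1)] rmod_addhx[OF assms(1)] assms(2)
      rmod_yc[OF assms(1) rmod_xc[OF assms]]] .
  then show ?thesis using rmod_xy[OF assms(1) rmod_xc[OF assms]] by simp
qed

lemma telescope: assumes "is_rmod M" "n \<in> car M"
  shows "n = (\<Sum>a<K. (yo M ^^ a) (F1 M ((xo M ^^ a) n))) + (yo M ^^ K) ((xo M ^^ K) n)"
proof (induction K)
  case 0 then show ?case by simp
next
  case (Suc K)
  let ?z = "(xo M ^^ K) n"
  have zc: "?z \<in> car M" using rmod_xpow(2)[OF assms] .
  have e: "?z = F1 M ?z + yo M (xo M ?z)" unfolding F1_def by simp
  have "(yo M ^^ K) ?z = (yo M ^^ K) (F1 M ?z) + (yo M ^^ K) (yo M (xo M ?z))"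
    using addhD(1)[OF rmod_grp[OF assms(1)] rmod_ypow(1)[OF assms(1)] F1_car[OF assms(1) zc]
       rmod_yc[OF assms(1) rmod_xc[OF assms(1) zc]]] e by simp
  also have "(yo M ^^ K) (yo M (xo M ?z)) = (yo M ^^ Suc K) ((xo M ^^ Suc K) n)"
    by (simp add: funpow_swap1)
  finally show ?case using Suc by (simp add: add.assoc)
qed

lemma subsp_sum: assumes "subsp s N V" "\<And>i. i\<in>S \<Longrightarrow> h i \<in> N" shows "sum h S \<in> N"
proof (cases "finite S")
  case True then show ?thesis using assms(2)
  proof (induction S rule: finite_induct)
    case empty then show ?case using assms(1) unfolding subsp_def by simp
  next
    case (insert x F)
    then have "h x \<in> N" "sum h F \<in> N" by auto
    moreover have "sum h (insert x F) = h x + sum h F" using insert(1,2) by simp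
    ultimately show ?case using assms(1) unfolding subsp_def by simp
  qed
qed (use assms(1) in \<open>simp add: subsp_def\<close>)

lemma nilD: "n \<in> nil M \<Longrightarrow> n \<in> car M \<and> (\<exists>N. (xo M ^^ N) n = 0)"
  unfolding nil_def by blast
lemma nilI: "n \<in> car M \<Longrightarrow> (xo M ^^ N) n = 0 \<Longrightarrow> n \<in> nil M"
  unfolding nil_def by blast

lemma nil_sub: "is_rmod M \<Longrightarrow> nil M \<subseteq> car M"
  unfolding nil_def by blast

lemma xpow_add0: assumes "is_rmod M" "(xo M ^^ N) n = 0" shows "(xo M ^^ (K + N)) n = 0"
  using assms rmod_xpow0[OF assms(1)] by (simp add: funpow_add)

lemma nil_grp: assumes "is_rmod M" shows "grp (nil M)"
proof -
  have G: "grp (car M)" using rmod_grp[OF assms] .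
  have "0 \<in> nil M" unfolding nil_def using grpD(1)[OF G] by (auto intro: exI[of _ 0])
  moreover have "a + b \<in> nil M" if ab: "a \<in> nil M" "b \<in> nil M" for a b
  proof -
    obtain N1 N2 where N: "(xo M ^^ N1) a = 0" "(xo M ^^ N2) b = 0" "a \<in> car M" "b \<in> car M"
      using nilD[OF ab(1)] nilD[OF ab(2)] by blast
    have "(xo M ^^ (N2 + N1)) a = 0" "(xo M ^^ (N1 + N2)) b = 0"
      using xpow_add0[OF assms N(1)] xpow_add0[OF assms N(2)] by blast+
    then have "(xo M ^^ (N1 + N2)) (a + b) = 0"
      using addhD(1)[OF G rmod_xpow(1)[OF assms] N(3,4)] by (simp add: add.commute)
    then show ?thesis unfolding nil_def using grpD(2)[OF G N(3,4)] by blast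
  qed
  moreover have "- a \<in> nil M" if a: "a \<in> nil M" for a
  proof -
    obtain N1 where N: "(xo M ^^ N1) a = 0" "a \<in> car M"
      using nilD[OF a] by blast
    then have "(xo M ^^ N1) (-a) = 0"
      using addhD(2)[OF G rmod_xpow(1)[OF assms] N(2)] by simp
    then show ?thesis unfolding nil_def using grpD(3)[OF G N(2)] by blast
  qed
  ultimately show ?thesis unfolding grp_def by blast
qed

lemma nil_x: assumes "is_rmod M" "n \<in> nil M" shows "xo M n \<in> nil M"
proof -
  obtain N where N: "(xo M ^^ N) n = 0" "n \<in> car M" using nilD[OF assms(2)] by blast
  have "(xo M ^^ N) (xo M n) = xo M ((xo M ^^ N) n)" by (simp add: funpow_swap1)
  also have "\<dots> = 0" using N(1) addh0[OF rmod_grp[OF assms(1)] rmod_addhx[OF assms(1)]] by simp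
  finally have "(xo M ^^ N) (xo M n) = 0" .
  then show ?thesis unfolding nil_def using rmod_xc[OF assms(1) N(2)] by blast
qed

lemma nil_y: assumes "is_rmod M" "n \<in> nil M" shows "yo M n \<in> nil M"
proof -
  obtain N where N: "(xo M ^^ N) n = 0" "n \<in> car M" using nilD[OF assms(2)] by blast
  have "(xo M ^^ Suc N) (yo M n) = (xo M ^^ N) (xo M (yo M n))" by (simp add: funpow_swap1)
  then have "(xo M ^^ Suc N) (yo M n) = 0" using N rmod_xy[OF assms(1) N(2)] by simp
  then show ?thesis unfolding nil_def using rmod_yc[OF assms(1) N(2)] by blast
qed

lemma nil_sc: assumes "is_rmod M" "n \<in> nil M" shows "sc M c n \<in> nil M"
proof -
  obtain N where N: "(xo M ^^ N) n = 0" "n \<in> car M" using nilD[OF assms(2)] by blast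
  have "(xo M ^^ N) (sc M c n) = 0" using N rmod_xpow_sc[OF assms(1) N(2)]
     kspace_sc0[OF rmod_ks[OF assms(1)]] by simp
  moreover have "sc M c n \<in> car M" using rmod_ks[OF assms(1)] N(2) unfolding kspace_def by blast
  ultimately show ?thesis unfolding nil_def by blast
qed

lemma nil_F1: assumes "is_rmod M" "m \<in> car M" shows "F1 M m \<in> nil M"
  unfolding nil_def using F1_car[OF assms] F1_x[OF assms] by (auto intro: exI[of _ 1])

lemma IM_nil: assumes "is_rmod M" shows "IM M = nil M"
proof
  have s: "subsp (sc M) (nil M) (car M)" unfolding subsp_def
  proof (intro conjI ballI allI)
    show "nil M \<subseteq> car M" using nil_sub[OF assms] .
    show "0 \<in> nil M" using grpD(1)[OF nil_grp[OF assms]] .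
    show "a + b \<in> nil M" if "a \<in> nil M" "b \<in> nil M" for a b using grpD(2)[OF nil_grp[OF assms] that] .
    show "sc M c a \<in> nil M" if "a \<in> nil M" for c a using nil_sc[OF assms that] .
  qed
  have x: "xo M ` nil M \<subseteq> nil M" using nil_x[OF assms] by blast
  have y: "yo M ` nil M \<subseteq> nil M" using nil_y[OF assms] by blast
  have f: "(\<lambda>m. m - yo M (xo M m)) ` car M \<subseteq> nil M" using nil_F1[OF assms] unfolding F1_def by blast
  have "nil M \<in> {N. subsp (sc M) N (car M) \<and> xo M ` N \<subseteq> N \<and> yo M ` N \<subseteq> N
              \<and> (\<lambda>m. m - yo M (xo M m)) ` car M \<subseteq> N}"
    using s x y f by (intro CollectI conjI)
  then show "IM M \<subseteq> nil M" unfolding IM_def by (rule Inter_lower)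
next
  show "nil M \<subseteq> IM M" unfolding IM_def
  proof (intro subsetI InterI)
    fix n N0 assume n: "n \<in> nil M" and N0: "N0 \<in> {N. subsp (sc M) N (car M) \<and> xo M ` N \<subseteq> N \<and> yo M ` N \<subseteq> N
              \<and> (\<lambda>m. m - yo M (xo M m)) ` car M \<subseteq> N}"
    obtain K where K: "(xo M ^^ K) n = 0" "n \<in> car M" using nilD[OF n] by blast
    have S: "subsp (sc M) N0 (car M)" and Yc: "yo M ` N0 \<subseteq> N0"
      and Fc: "(\<lambda>m. m - yo M (xo M m)) ` car M \<subseteq> N0"
      using N0 unfolding mem_Collect_eq by blast+
    have Y: "(yo M ^^ a) w \<in> N0" if "w \<in> N0" for w a
    proof (induction a)
      case 0 then show ?case using that by simp
    next
      case (Suc a)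
      then have "yo M ((yo M ^^ a) w) \<in> N0" using Yc by blast
      then show ?case by simp
    qed
    have "(yo M ^^ a) (F1 M ((xo M ^^ a) n)) \<in> N0" for a
    proof -
      have c: "(xo M ^^ a) n \<in> car M" using rmod_xpow(2)[OF assms K(2)] .
      have "F1 M ((xo M ^^ a) n) \<in> N0" using subsetD[OF Fc imageI[OF c]] unfolding F1_def .
      then show ?thesis using Y by blast
    qed
    then have "(\<Sum>a<K. (yo M ^^ a) (F1 M ((xo M ^^ a) n))) \<in> N0" by (rule subsp_sum[OF S])
    moreover have "(yo M ^^ K) ((xo M ^^ K) n) = 0" using K(1) rmod_ypow0[OF assms] by simp
    ultimately show "n \<in> N0" using telescope[OF assms K(2), of K] by simp
  qed
qed



lemma cos_eq: assumes "grp N" "m - m' \<in> N" shows "cos N m = cos N m'"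
proof -
  have "x \<in> cos N m'" if xin: "x \<in> cos N m" for x
  proof -
    obtain n where n: "n \<in> N" "x = m + n" using xin unfolding cos_def by blast
    have "(m - m') + n \<in> N" using grpD(2)[OF assms(1) assms(2) n(1)] .
    moreover have "x = m' + ((m - m') + n)" using n(2) by simp
    ultimately show ?thesis unfolding cos_def by blast
  qed
  moreover have "x \<in> cos N m" if xin: "x \<in> cos N m'" for x
  proof -
    obtain n where n: "n \<in> N" "x = m' + n" using xin unfolding cos_def by blast
    have "n - (m - m') \<in> N" using grpD(4)[OF assms(1) n(1) assms(2)] .
    moreover have "x = m + (n - (m - m'))" using n(2) by simp
    ultimately show ?thesis unfolding cos_def by blast
  qed
  ultimately show ?thesis by blast
qed

definition PP :: "('k::field, 'm::ab_group_add) rmod \<Rightarrow> ('m set \<Rightarrow> 'm) \<Rightarrow> 'm \<Rightarrow> 'm" where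
  "PP M \<alpha> m = \<alpha> (cos (IM M) m)"

lemma wsp_rmod: "wsp M \<alpha> \<Longrightarrow> is_rmod M" unfolding wsp_def by blast

lemma IM_grp: "is_rmod M \<Longrightarrow> grp (IM M)" using IM_nil nil_grp by metis
lemma IM_car: "is_rmod M \<Longrightarrow> n \<in> IM M \<Longrightarrow> n \<in> car M" using IM_nil nil_sub by blast

lemma P_car: "wsp M \<alpha> \<Longrightarrow> m \<in> car M \<Longrightarrow> PP M \<alpha> m \<in> car M"
  unfolding wsp_def PP_def by blast
lemma P_diff: "wsp M \<alpha> \<Longrightarrow> m \<in> car M \<Longrightarrow> PP M \<alpha> m - m \<in> IM M"
  unfolding wsp_def PP_def by blast
lemma P_add: "wsp M \<alpha> \<Longrightarrow> a \<in> car M \<Longrightarrow> b \<in> car M \<Longrightarrow> PP M \<alpha> (a + b) = PP M \<alpha> a + PP M \<alpha> b"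
  unfolding wsp_def PP_def by blast
lemma P_sc: "wsp M \<alpha> \<Longrightarrow> a \<in> car M \<Longrightarrow> PP M \<alpha> (sc M c a) = sc M c (PP M \<alpha> a)"
  unfolding wsp_def PP_def by blast
lemma P_x: "wsp M \<alpha> \<Longrightarrow> a \<in> car M \<Longrightarrow> PP M \<alpha> (xo M a) = xo M (PP M \<alpha> a)"
  unfolding wsp_def PP_def by blast
lemma P_addh: "wsp M \<alpha> \<Longrightarrow> addh (car M) (PP M \<alpha>)"
  unfolding addh_def using P_add by blast

lemma P_0: "wsp M \<alpha> \<Longrightarrow> PP M \<alpha> 0 = 0"
  using addh0[OF rmod_grp[OF wsp_rmod] P_addh] by blast
lemma P_neg: "wsp M \<alpha> \<Longrightarrow> a \<in> car M \<Longrightarrow> PP M \<alpha> (-a) = - PP M \<alpha> a"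
  using addhD(2)[OF rmod_grp[OF wsp_rmod] P_addh] by blast
lemma P_minus: "wsp M \<alpha> \<Longrightarrow> a \<in> car M \<Longrightarrow> b \<in> car M \<Longrightarrow> PP M \<alpha> (a - b) = PP M \<alpha> a - PP M \<alpha> b"
  using addhD(3)[OF rmod_grp[OF wsp_rmod] P_addh] by blast

lemma P_cong: assumes "wsp M \<alpha>" "m - m' \<in> IM M" shows "PP M \<alpha> m = PP M \<alpha> m'"
  unfolding PP_def using cos_eq[OF IM_grp[OF wsp_rmod[OF assms(1)]] assms(2)] by simp

lemma P_P: assumes "wsp M \<alpha>" "m \<in> car M" shows "PP M \<alpha> (PP M \<alpha> m) = PP M \<alpha> m"
  using P_cong[OF assms(1) P_diff[OF assms]] .

lemma P_IM: assumes "wsp M \<alpha>" "n \<in> IM M" shows "PP M \<alpha> n = 0"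
proof -
  have "n - 0 \<in> IM M" using assms(2) by simp
  then show ?thesis using P_cong[OF assms(1)] P_0[OF assms(1)] by metis
qed

lemma imal_eq: "imal M \<alpha> = PP M \<alpha> ` car M"
  unfolding imal_def quot_def PP_def by (simp add: image_comp comp_def)

lemma imal_car: "wsp M \<alpha> \<Longrightarrow> w \<in> imal M \<alpha> \<Longrightarrow> w \<in> car M"
  unfolding imal_eq using P_car by blast
lemma imal_P: assumes "wsp M \<alpha>" "w \<in> imal M \<alpha>" shows "PP M \<alpha> w = w"
  using assms P_P unfolding imal_eq by blast
lemma imal_IM: assumes "wsp M \<alpha>" "w \<in> imal M \<alpha>" "w \<in> IM M" shows "w = 0"
  using imal_P[OF assms(1,2)] P_IM[OF assms(1,3)] by simp

lemma decomp_unique: assumes "wsp M \<alpha>" "m \<in> car M" "m1 \<in> IM M" "m - m1 \<in> imal M \<alpha>"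
  shows "m1 = m - PP M \<alpha> m"
proof -
  have c: "m1 \<in> car M" using IM_car[OF wsp_rmod[OF assms(1)] assms(3)] .
  have "PP M \<alpha> (m - m1) = m - m1" using imal_P[OF assms(1,4)] .
  moreover have "PP M \<alpha> (m - m1) = PP M \<alpha> m - PP M \<alpha> m1" using P_minus[OF assms(1,2) c] .
  moreover have "PP M \<alpha> m1 = 0" using P_IM[OF assms(1,3)] .
  ultimately show ?thesis by (simp add: algebra_simps)
qed

lemma decomp_ex: assumes "wsp M \<alpha>" "m \<in> car M"
  shows "m - PP M \<alpha> m \<in> IM M" "m - (m - PP M \<alpha> m) \<in> imal M \<alpha>"
proof -
  have "- (PP M \<alpha> m - m) \<in> IM M" using grpD(3)[OF IM_grp[OF wsp_rmod[OF assms(1)]] P_diff[OF assms]] .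
  then show "m - PP M \<alpha> m \<in> IM M" by simp
  show "m - (m - PP M \<alpha> m) \<in> imal M \<alpha>" unfolding imal_eq using assms(2) by simp
qed

lemma Xi_simps: "Mu (Xi (M, \<alpha>)) = {m \<in> car M. xo M m = 0}" "Mv (Xi (M, \<alpha>)) = imal M \<alpha>"
  "scu (Xi (M, \<alpha>)) = sc M" "scv (Xi (M, \<alpha>)) = sc M" "pf (Xi (M, \<alpha>)) = xo M"
  "pe (Xi (M, \<alpha>)) = (\<lambda>m. THE m1. m1 \<in> IM M \<and> yo M m - m1 \<in> imal M \<alpha>)"
  unfolding Xi_def by simp_all

lemma Xi_pe: assumes "wsp M \<alpha>" "v \<in> car M"
  shows "pe (Xi (M, \<alpha>)) v = yo M v - PP M \<alpha> (yo M v)"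
proof -
  have yv: "yo M v \<in> car M" using rmod_yc[OF wsp_rmod[OF assms(1)] assms(2)] .
  show ?thesis unfolding Xi_simps
  proof (rule the_equality)
    show "yo M v - PP M \<alpha> (yo M v) \<in> IM M \<and> yo M v - (yo M v - PP M \<alpha> (yo M v)) \<in> imal M \<alpha>"
      using decomp_ex[OF assms(1) yv] by blast
    show "m1 = yo M v - PP M \<alpha> (yo M v)" if "m1 \<in> IM M \<and> yo M v - m1 \<in> imal M \<alpha>" for m1
      using decomp_unique[OF assms(1) yv] that by blast
  qed
qed



lemma rmod_x0: "is_rmod M \<Longrightarrow> xo M 0 = 0"
  using addh0[OF rmod_grp rmod_addhx] by blast
lemma rmod_y0: "is_rmod M \<Longrightarrow> yo M 0 = 0"
  using addh0[OF rmod_grp rmod_addhy] by blast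
lemma rmod_scc: "is_rmod M \<Longrightarrow> m \<in> car M \<Longrightarrow> sc M c m \<in> car M"
  using rmod_ks unfolding kspace_def by blast

lemma Mu_kspace: assumes "is_rmod M" shows "kspace (sc M) {m \<in> car M. xo M m = 0}"
proof (rule kspace_sub[OF rmod_ks[OF assms]])
  have G: "grp (car M)" using rmod_grp[OF assms] .
  show "{m \<in> car M. xo M m = 0} \<subseteq> car M" by blast
  show "grp {m \<in> car M. xo M m = 0}" unfolding grp_def
  proof (intro conjI ballI)
    show "0 \<in> {m \<in> car M. xo M m = 0}" using grpD(1)[OF G] rmod_x0[OF assms] by simp
    show "a + b \<in> {m \<in> car M. xo M m = 0}" if "a \<in> {m \<in> car M. xo M m = 0}" "b \<in> {m \<in> car M. xo M m = 0}" for a b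
      using that grpD(2)[OF G] addhD(1)[OF G rmod_addhx[OF assms]] by simp
    show "- a \<in> {m \<in> car M. xo M m = 0}" if "a \<in> {m \<in> car M. xo M m = 0}" for a
      using that grpD(3)[OF G] addhD(2)[OF G rmod_addhx[OF assms]] by simp
  qed
  show "sc M c a \<in> {m \<in> car M. xo M m = 0}" if "a \<in> {m \<in> car M. xo M m = 0}" for c a
    using that rmod_scc[OF assms] rmod_xsc[OF assms] kspace_sc0[OF rmod_ks[OF assms]] by simp
qed

lemma imal_kspace: assumes "wsp M \<alpha>" shows "kspace (sc M) (imal M \<alpha>)"
proof (rule kspace_sub[OF rmod_ks[OF wsp_rmod[OF assms]]])
  have R: "is_rmod M" using wsp_rmod[OF assms] .
  have G: "grp (car M)" using rmod_grp[OF R] .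
  show "imal M \<alpha> \<subseteq> car M" using imal_car[OF assms] by blast
  show "grp (imal M \<alpha>)" unfolding grp_def imal_eq
  proof (intro conjI ballI)
    show "0 \<in> PP M \<alpha> ` car M" using grpD(1)[OF G] P_0[OF assms] by (metis imageI)
    show "a + b \<in> PP M \<alpha> ` car M" if ab0: "a \<in> PP M \<alpha> ` car M" "b \<in> PP M \<alpha> ` car M" for a b
    proof -
      obtain a' b' where ab: "a' \<in> car M" "b' \<in> car M" "a = PP M \<alpha> a'" "b = PP M \<alpha> b'"
        using ab0 by blast
      then have "a + b = PP M \<alpha> (a' + b')" using P_add[OF assms] by simp
      then show ?thesis using grpD(2)[OF G ab(1,2)] by blast
    qed
    show "- a \<in> PP M \<alpha> ` car M" if a0: "a \<in> PP M \<alpha> ` car M" for a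
    proof -
      obtain a' where ab: "a' \<in> car M" "a = PP M \<alpha> a'" using a0 by blast
      then have "- a = PP M \<alpha> (- a')" using P_neg[OF assms] by simp
      then show ?thesis using grpD(3)[OF G ab(1)] by blast
    qed
  qed
  show "sc M c a \<in> imal M \<alpha>" if a0: "a \<in> imal M \<alpha>" for c a
  proof -
    obtain a' where ab: "a' \<in> car M" "a = PP M \<alpha> a'" using a0 unfolding imal_eq by blast
    then have "sc M c a = PP M \<alpha> (sc M c a')" using P_sc[OF assms] by simp
    then show ?thesis unfolding imal_eq using rmod_scc[OF R ab(1)] by blast
  qed
qed

lemma imal_x: assumes "wsp M \<alpha>" "w \<in> imal M \<alpha>" shows "xo M w \<in> imal M \<alpha>"
proof -
  obtain a' where ab: "a' \<in> car M" "w = PP M \<alpha> a'" using assms(2) unfolding imal_eq by blast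
  then have "xo M w = PP M \<alpha> (xo M a')" using P_x[OF assms(1)] by simp
  then show ?thesis unfolding imal_eq using rmod_xc[OF wsp_rmod[OF assms(1)] ab(1)] by blast
qed

lemma pe_Mu: assumes "wsp M \<alpha>" "w \<in> imal M \<alpha>"
  shows "yo M w - PP M \<alpha> (yo M w) \<in> car M" "xo M (yo M w - PP M \<alpha> (yo M w)) = 0"
proof -
  have R: "is_rmod M" using wsp_rmod[OF assms(1)] .
  have wc: "w \<in> car M" using imal_car[OF assms] .
  have yc: "yo M w \<in> car M" using rmod_yc[OF R wc] .
  show "yo M w - PP M \<alpha> (yo M w) \<in> car M" using grpD(4)[OF rmod_grp[OF R] yc P_car[OF assms(1) yc]] .
  have "xo M (yo M w - PP M \<alpha> (yo M w)) = xo M (yo M w) - xo M (PP M \<alpha> (yo M w))"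
    using addhD(3)[OF rmod_grp[OF R] rmod_addhx[OF R] yc P_car[OF assms(1) yc]] .
  also have "\<dots> = w - PP M \<alpha> (xo M (yo M w))" using rmod_xy[OF R wc] P_x[OF assms(1) yc] by simp
  also have "\<dots> = 0" using rmod_xy[OF R wc] imal_P[OF assms] by simp
  finally show "xo M (yo M w - PP M \<alpha> (yo M w)) = 0" .
qed

lemma drep_Xi: assumes "wsp M \<alpha>" shows "drep (Xi (M, \<alpha>))"
proof -
  have R: "is_rmod M" using wsp_rmod[OF assms] .
  have G: "grp (car M)" using rmod_grp[OF R] .
  have ks: "kspace (sc M) (car M)" using rmod_ks[OF R] .
  have pe: "pe (Xi (M, \<alpha>)) w = yo M w - PP M \<alpha> (yo M w)" if "w \<in> imal M \<alpha>" for w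
    using Xi_pe[OF assms imal_car[OF assms that]] .
  have k1: "klin (sc M) (sc M) (imal M \<alpha>) {m \<in> car M. xo M m = 0} (pe (Xi (M, \<alpha>)))"
    unfolding klin_def
  proof (intro conjI ballI allI)
    show "pe (Xi (M, \<alpha>)) ` imal M \<alpha> \<subseteq> {m \<in> car M. xo M m = 0}"
      using pe pe_Mu[OF assms] by auto
    show "pe (Xi (M, \<alpha>)) (a + b) = pe (Xi (M, \<alpha>)) a + pe (Xi (M, \<alpha>)) b"
      if ab: "a \<in> imal M \<alpha>" "b \<in> imal M \<alpha>" for a b
    proof -
      have abc: "a \<in> car M" "b \<in> car M" using imal_car[OF assms] ab by blast+
      have yab: "yo M a \<in> car M" "yo M b \<in> car M" using rmod_yc[OF R] abc by blast+
      have "a + b \<in> imal M \<alpha>" using imal_kspace[OF assms] ab unfolding kspace_def by blast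
      then have "pe (Xi (M, \<alpha>)) (a + b) = yo M (a + b) - PP M \<alpha> (yo M (a + b))" using pe by blast
      also have "\<dots> = (yo M a + yo M b) - (PP M \<alpha> (yo M a) + PP M \<alpha> (yo M b))"
        using addhD(1)[OF G rmod_addhy[OF R] abc] P_add[OF assms yab] by simp
      also have "\<dots> = (yo M a - PP M \<alpha> (yo M a)) + (yo M b - PP M \<alpha> (yo M b))"
        by (simp add: algebra_simps)
      also have "\<dots> = pe (Xi (M, \<alpha>)) a + pe (Xi (M, \<alpha>)) b"
        by (simp only: pe[OF ab(1)] pe[OF ab(2)])
      finally show ?thesis .
    qed
    show "pe (Xi (M, \<alpha>)) (sc M c a) = sc M c (pe (Xi (M, \<alpha>)) a)" if a: "a \<in> imal M \<alpha>" for c a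
    proof -
      have ac: "a \<in> car M" using imal_car[OF assms a] .
      have ya: "yo M a \<in> car M" using rmod_yc[OF R ac] .
      have "sc M c a \<in> imal M \<alpha>" using imal_kspace[OF assms] a unfolding kspace_def by blast
      then have "pe (Xi (M, \<alpha>)) (sc M c a) = yo M (sc M c a) - PP M \<alpha> (yo M (sc M c a))" using pe by blast
      also have "\<dots> = sc M c (yo M a) - sc M c (PP M \<alpha> (yo M a))"
        using rmod_ysc[OF R ac] P_sc[OF assms ya] by simp
      also have "\<dots> = sc M c (yo M a - PP M \<alpha> (yo M a))"
        using kspace_sc_diff[OF ks ya P_car[OF assms ya]] by simp
      finally show ?thesis using pe[OF a] by simp
    qed
  qed
  have k2: "klin (sc M) (sc M) (imal M \<alpha>) (imal M \<alpha>) (xo M)"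
    unfolding klin_def
  proof (intro conjI ballI allI)
    show "xo M ` imal M \<alpha> \<subseteq> imal M \<alpha>" using imal_x[OF assms] by blast
    show "xo M (a + b) = xo M a + xo M b" if "a \<in> imal M \<alpha>" "b \<in> imal M \<alpha>" for a b
      using addhD(1)[OF G rmod_addhx[OF R]] imal_car[OF assms] that by blast
    show "xo M (sc M c a) = sc M c (xo M a)" if "a \<in> imal M \<alpha>" for c a
      using rmod_xsc[OF R] imal_car[OF assms] that by blast
  qed
  have bij: "bij_betw (xo M) (imal M \<alpha>) (imal M \<alpha>)" unfolding bij_betw_def
  proof
    show "inj_on (xo M) (imal M \<alpha>)"
    proof (rule inj_onI)
      fix a b assume ab: "a \<in> imal M \<alpha>" "b \<in> imal M \<alpha>" and e: "xo M a = xo M b"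
      have abc: "a \<in> car M" "b \<in> car M" using imal_car[OF assms] ab by blast+
      have wi: "a - b \<in> imal M \<alpha>" using imal_kspace[OF assms] ab unfolding kspace_def
        by (metis diff_conv_add_uminus)
      have wc: "a - b \<in> car M" using grpD(4)[OF G abc] .
      have "xo M (a - b) = 0" using addhD(3)[OF G rmod_addhx[OF R] abc] e by simp
      then have "(xo M ^^ 1) (a - b) = 0" by simp
      then have "a - b \<in> IM M" using IM_nil[OF R] nilI[OF wc] by blast
      then have "a - b = 0" using imal_IM[OF assms wi] by blast
      then show "a = b" by simp
    qed
    show "xo M ` imal M \<alpha> = imal M \<alpha>"
    proof
      show "xo M ` imal M \<alpha> \<subseteq> imal M \<alpha>" using imal_x[OF assms] by blast
      show "imal M \<alpha> \<subseteq> xo M ` imal M \<alpha>"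
      proof
        fix w assume w: "w \<in> imal M \<alpha>"
        have wc: "w \<in> car M" using imal_car[OF assms w] .
        have yc: "yo M w \<in> car M" using rmod_yc[OF R wc] .
        have "xo M (PP M \<alpha> (yo M w)) = w" using P_x[OF assms yc] rmod_xy[OF R wc] imal_P[OF assms w] by simp
        moreover have "PP M \<alpha> (yo M w) \<in> imal M \<alpha>" unfolding imal_eq using yc by blast
        ultimately show "w \<in> xo M ` imal M \<alpha>" by (metis imageI)
      qed
    qed
  qed
  show ?thesis unfolding drep_def
    using Mu_kspace[OF R] imal_kspace[OF assms] k1 k2 bij by (simp add: Xi_simps(1-5))
qed



lemma rlin_klin: "rlin M N f \<Longrightarrow> klin (sc M) (sc N) (car M) (car N) f" unfolding rlin_def by blast
lemma rlin_car: "rlin M N f \<Longrightarrow> m \<in> car M \<Longrightarrow> f m \<in> car N" unfolding rlin_def klin_def by blast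
lemma rlin_addh: "rlin M N f \<Longrightarrow> addh (car M) f" using rlin_klin klin_addh by blast
lemma rlin_x: "rlin M N f \<Longrightarrow> m \<in> car M \<Longrightarrow> f (xo M m) = xo N (f m)" unfolding rlin_def by blast
lemma rlin_y: "rlin M N f \<Longrightarrow> m \<in> car M \<Longrightarrow> f (yo M m) = yo N (f m)" unfolding rlin_def by blast
lemma rlin_sc: "rlin M N f \<Longrightarrow> m \<in> car M \<Longrightarrow> f (sc M c m) = sc N c (f m)" unfolding rlin_def klin_def by blast
lemma rlin_0: "is_rmod M \<Longrightarrow> rlin M N f \<Longrightarrow> f 0 = 0"
  using addh0[OF rmod_grp rlin_addh] by blast

lemma rlin_xpow: assumes "is_rmod M" "rlin M N f" "m \<in> car M"
  shows "f ((xo M ^^ n) m) = (xo N ^^ n) (f m)"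
proof (induction n)
  case (Suc n)
  then show ?case using rlin_x[OF assms(2) rmod_xpow(2)[OF assms(1) assms(3)]] by simp
qed simp
lemma rlin_ypow: assumes "is_rmod M" "rlin M N f" "m \<in> car M"
  shows "f ((yo M ^^ n) m) = (yo N ^^ n) (f m)"
proof (induction n)
  case (Suc n)
  then show ?case using rlin_y[OF assms(2) rmod_ypow(2)[OF assms(1) assms(3)]] by simp
qed simp

lemma rlin_IM: assumes "is_rmod M" "is_rmod N" "rlin M N f" "n \<in> IM M" shows "f n \<in> IM N"
proof -
  obtain K where K: "(xo M ^^ K) n = 0" "n \<in> car M" using nilD assms(4) IM_nil[OF assms(1)] by blast
  have "(xo N ^^ K) (f n) = f ((xo M ^^ K) n)" using rlin_xpow[OF assms(1,3) K(2)] by simp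
  then have "(xo N ^^ K) (f n) = 0" using K(1) rlin_0[OF assms(1,3)] by simp
  then show ?thesis using IM_nil[OF assms(2)] nilI rlin_car[OF assms(3) K(2)] by blast
qed

lemma dmor_Xi: assumes "wsp M \<alpha>" "wsp N \<beta>" "cmor (M, \<alpha>) (N, \<beta>) f"
  shows "dmor (Xi (M, \<alpha>)) (Xi (N, \<beta>)) (f, f)"
proof -
  have RM: "is_rmod M" using wsp_rmod[OF assms(1)] .
  have RN: "is_rmod N" using wsp_rmod[OF assms(2)] .
  have rl: "rlin M N f" and im: "f ` imal M \<alpha> \<subseteq> imal N \<beta>" using assms(3) unfolding cmor_def by simp_all
  have kl: "klin (sc M) (sc N) (car M) (car N) f" using rlin_klin[OF rl] .
  have k1: "klin (sc M) (sc N) {m \<in> car M. xo M m = 0} {m \<in> car N. xo N m = 0} f"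
    unfolding klin_def
  proof (intro conjI ballI allI)
    show "f ` {m \<in> car M. xo M m = 0} \<subseteq> {m \<in> car N. xo N m = 0}"
    proof
      fix y assume "y \<in> f ` {m \<in> car M. xo M m = 0}"
      then obtain m where m: "m \<in> car M" "xo M m = 0" "y = f m" by blast
      have "xo N (f m) = f (xo M m)" using rlin_x[OF rl m(1)] by simp
      then show "y \<in> {m \<in> car N. xo N m = 0}" using m rlin_car[OF rl m(1)] rlin_0[OF RM rl] by simp
    qed
    show "f (a + b) = f a + f b" if "a \<in> {m \<in> car M. xo M m = 0}" "b \<in> {m \<in> car M. xo M m = 0}" for a b
      using kl that unfolding klin_def by blast
    show "f (sc M c a) = sc N c (f a)" if "a \<in> {m \<in> car M. xo M m = 0}" for c a
      using kl that unfolding klin_def by blast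
  qed
  have k2: "klin (sc M) (sc N) (imal M \<alpha>) (imal N \<beta>) f"
    unfolding klin_def
  proof (intro conjI ballI allI)
    show "f ` imal M \<alpha> \<subseteq> imal N \<beta>" using im .
    show "f (a + b) = f a + f b" if "a \<in> imal M \<alpha>" "b \<in> imal M \<alpha>" for a b
      using kl that imal_car[OF assms(1)] unfolding klin_def by blast
    show "f (sc M c a) = sc N c (f a)" if "a \<in> imal M \<alpha>" for c a
      using kl that imal_car[OF assms(1)] unfolding klin_def by blast
  qed
  have pe: "f (pe (Xi (M, \<alpha>)) v) = pe (Xi (N, \<beta>)) (f v)" if v: "v \<in> imal M \<alpha>" for v
  proof -
    have vc: "v \<in> car M" using imal_car[OF assms(1) v] .
    have fv: "f v \<in> imal N \<beta>" using im v by blast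
    have fvc: "f v \<in> car N" using imal_car[OF assms(2) fv] .
    have yc: "yo M v \<in> car M" using rmod_yc[OF RM vc] .
    have pc: "PP M \<alpha> (yo M v) \<in> car M" using P_car[OF assms(1) yc] .
    have e: "f (pe (Xi (M, \<alpha>)) v) = yo N (f v) - f (PP M \<alpha> (yo M v))"
      using Xi_pe[OF assms(1) vc] addhD(3)[OF rmod_grp[OF RM] rlin_addh[OF rl] yc pc] rlin_y[OF rl vc] by simp
    have "f (pe (Xi (M, \<alpha>)) v) \<in> IM N"
      using rlin_IM[OF RM RN rl] Xi_pe[OF assms(1) vc] decomp_ex(1)[OF assms(1) yc] by simp
    moreover have "yo N (f v) - f (pe (Xi (M, \<alpha>)) v) \<in> imal N \<beta>"
    proof -
      have "PP M \<alpha> (yo M v) \<in> imal M \<alpha>" unfolding imal_eq using yc by blast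
      then have "f (PP M \<alpha> (yo M v)) \<in> imal N \<beta>" using im by blast
      then show ?thesis using e by simp
    qed
    ultimately have "f (pe (Xi (M, \<alpha>)) v) = yo N (f v) - PP N \<beta> (yo N (f v))"
      using decomp_unique[OF assms(2) rmod_yc[OF RN fvc]] by blast
    then show ?thesis using Xi_pe[OF assms(2) fvc] by simp
  qed
  show ?thesis unfolding dmor_def
    using k1 k2 pe rlin_x[OF rl] imal_car[OF assms(1)] by (simp add: Xi_simps(1-5))
qed



definition PC :: "'u::ab_group_add set \<Rightarrow> 'v::ab_group_add set \<Rightarrow> ((nat \<Rightarrow> 'u) \<times> 'v) set" where
  "PC U V = {(g, v). (\<forall>a. g a \<in> U) \<and> finite {a. g a \<noteq> 0} \<and> v \<in> V}"

lemma PC_iff: "(g, v) \<in> PC U V \<longleftrightarrow> (\<forall>a. g a \<in> U) \<and> finite {a. g a \<noteq> 0} \<and> v \<in> V"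
  unfolding PC_def by simp

lemma zero_pair: "(0 :: 'a::zero \<times> 'b::zero) = (0, 0)" by (simp add: zero_prod_def)

lemma kspaceD: assumes "kspace s V"
  shows "0\<in>V" "a\<in>V \<Longrightarrow> b\<in>V \<Longrightarrow> a+b\<in>V" "a\<in>V \<Longrightarrow> -a\<in>V" "a\<in>V \<Longrightarrow> s c a\<in>V"
    "a\<in>V \<Longrightarrow> b\<in>V \<Longrightarrow> s c (a+b) = s c a + s c b" "a\<in>V \<Longrightarrow> s (c+d) a = s c a + s d a"
    "a\<in>V \<Longrightarrow> s c (s d a) = s (c*d) a" "a\<in>V \<Longrightarrow> s 1 a = a"
  using assms unfolding kspace_def by blast+

lemma supp_add: "finite {a. g a \<noteq> 0} \<Longrightarrow> finite {a. h a \<noteq> 0} \<Longrightarrow> finite {a. g a + h a \<noteq> (0::'a::monoid_add)}"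
  by (rule finite_subset[of _ "{a. g a \<noteq> 0} \<union> {a. h a \<noteq> 0}"]) auto
lemma supp_map: "finite {a. g a \<noteq> 0} \<Longrightarrow> f 0 = 0 \<Longrightarrow> finite {a. f (g a) \<noteq> 0}"
  by (rule finite_subset[of _ "{a. g a \<noteq> 0}"]) auto

definition psc :: "('k \<Rightarrow> 'u \<Rightarrow> 'u) \<Rightarrow> ('k \<Rightarrow> 'v \<Rightarrow> 'v) \<Rightarrow> 'k \<Rightarrow> (nat \<Rightarrow> 'u) \<times> 'v \<Rightarrow> (nat \<Rightarrow> 'u) \<times> 'v" where
  "psc s1 s2 = (\<lambda>c (g, v). (\<lambda>a. s1 c (g a), s2 c v))"

lemma psc_Pair: "psc s1 s2 c (g, v) = (\<lambda>a. s1 c (g a), s2 c v)" unfolding psc_def by simp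

lemma kspace_P: assumes U: "kspace s1 U" and V: "kspace s2 V"
  shows "kspace (psc s1 s2) (PC U V)"
  unfolding kspace_def
proof (intro conjI ballI allI)
  note u = kspaceD[OF U] and v = kspaceD[OF V]
  show "0 \<in> PC U V" unfolding zero_pair PC_iff using u(1) v(1) by simp
  show "p + q \<in> PC U V" if "p \<in> PC U V" "q \<in> PC U V" for p q
  proof -
    obtain g v h w where pq: "p = (g, v)" "q = (h, w)" by (cases p, cases q)
    have "(\<forall>a. g a \<in> U) \<and> finite {a. g a \<noteq> 0} \<and> v \<in> V" "(\<forall>a. h a \<in> U) \<and> finite {a. h a \<noteq> 0} \<and> w \<in> V"
      using that unfolding pq PC_iff by blast+
    then have "(\<forall>a. g a + h a \<in> U) \<and> finite {a. g a + h a \<noteq> 0} \<and> v + w \<in> V"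
      using u(2) v(2) supp_add[of g h] by blast
    then show ?thesis unfolding pq by (simp add: PC_iff)
  qed
  show "- p \<in> PC U V" if "p \<in> PC U V" for p
  proof -
    obtain g v where pq: "p = (g, v)" by (cases p)
    have "{a. - g a \<noteq> 0} = {a. g a \<noteq> 0}" by simp
    moreover have "(\<forall>a. g a \<in> U) \<and> finite {a. g a \<noteq> 0} \<and> v \<in> V"
      using that unfolding pq PC_iff by blast
    ultimately have "(\<forall>a. - g a \<in> U) \<and> finite {a. - g a \<noteq> 0} \<and> - v \<in> V"
      using u(3) v(3) by simp
    then show ?thesis unfolding pq by (simp add: PC_iff)
  qed
  show "psc s1 s2 c p \<in> PC U V" if "p \<in> PC U V" for c p
  proof -
    obtain g v where pq: "p = (g, v)" by (cases p)
    have "(\<forall>a. g a \<in> U) \<and> finite {a. g a \<noteq> 0} \<and> v \<in> V"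
      using that unfolding pq PC_iff by blast
    then have "(\<forall>a. s1 c (g a) \<in> U) \<and> finite {a. s1 c (g a) \<noteq> 0} \<and> s2 c v \<in> V"
      using u(4) v(4) supp_map[of g "s1 c"] kspace_sc0[OF U] by blast
    then show ?thesis unfolding pq psc_Pair by (simp add: PC_iff)
  qed
  show "psc s1 s2 c (p + q) = psc s1 s2 c p + psc s1 s2 c q" if "p \<in> PC U V" "q \<in> PC U V" for c p q
  proof -
    obtain g v h w where pq: "p = (g, v)" "q = (h, w)" by (cases p, cases q)
    have "(\<forall>a. g a \<in> U) \<and> v \<in> V" "(\<forall>a. h a \<in> U) \<and> w \<in> V" using that unfolding pq PC_iff by blast+
    then show ?thesis using u(5) v(5) unfolding pq by (simp add: psc_Pair fun_eq_iff)
  qed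
  show "psc s1 s2 (c + d) p = psc s1 s2 c p + psc s1 s2 d p" if "p \<in> PC U V" for c d p
  proof -
    obtain g v where pq: "p = (g, v)" by (cases p)
    have "(\<forall>a. g a \<in> U) \<and> v \<in> V" using that unfolding pq PC_iff by blast
    then show ?thesis using u(6) v(6) unfolding pq by (simp add: psc_Pair fun_eq_iff)
  qed
  show "psc s1 s2 c (psc s1 s2 d p) = psc s1 s2 (c * d) p" if "p \<in> PC U V" for c d p
  proof -
    obtain g v where pq: "p = (g, v)" by (cases p)
    have "(\<forall>a. g a \<in> U) \<and> v \<in> V" using that unfolding pq PC_iff by blast
    then show ?thesis using u(7) v(7) unfolding pq by (simp add: psc_Pair fun_eq_iff)
  qed
  show "psc s1 s2 1 p = p" if "p \<in> PC U V" for p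
  proof -
    obtain g v where pq: "p = (g, v)" by (cases p)
    have "(\<forall>a. g a \<in> U) \<and> v \<in> V" using that unfolding pq PC_iff by blast
    then show ?thesis using u(8) v(8) unfolding pq by (simp add: psc_Pair fun_eq_iff)
  qed
qed



definition pinv :: "('k, 'u, 'v) rep \<Rightarrow> 'v \<Rightarrow> 'v" where
  "pinv r = the_inv_into (Mv r) (pf r)"

lemma Psi_car: "car (Psi_mod r) = PC (Mu r) (Mv r)"
  unfolding Psi_mod_def PC_def by simp
lemma Psi_sc: "sc (Psi_mod r) = psc (scu r) (scv r)"
  unfolding Psi_mod_def psc_def by simp
lemma Psi_xo: "xo (Psi_mod r) (g, v) = (\<lambda>a. g (Suc a), pf r v)"
  unfolding Psi_mod_def by simp
lemma Psi_yo: "yo (Psi_mod r) (g, v) = (\<lambda>a. if a = 0 then pe r v else g (a - 1), pinv r v)"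
  unfolding Psi_mod_def pinv_def by simp

lemma drepD: assumes "drep r"
  shows "kspace (scu r) (Mu r)" "kspace (scv r) (Mv r)" "klin (scv r) (scu r) (Mv r) (Mu r) (pe r)"
    "klin (scv r) (scv r) (Mv r) (Mv r) (pf r)" "bij_betw (pf r) (Mv r) (Mv r)"
  using assms unfolding drep_def by blast+

lemma dr_pe: assumes "drep r" "v \<in> Mv r" shows "pe r v \<in> Mu r"
  using drepD(3)[OF assms(1)] assms(2) unfolding klin_def by blast
lemma dr_pf: assumes "drep r" "v \<in> Mv r" shows "pf r v \<in> Mv r"
  using drepD(4)[OF assms(1)] assms(2) unfolding klin_def by blast
lemma dr_pe_add: assumes "drep r" "v \<in> Mv r" "w \<in> Mv r" shows "pe r (v + w) = pe r v + pe r w"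
  using drepD(3)[OF assms(1)] assms(2,3) unfolding klin_def by blast
lemma dr_pf_add: assumes "drep r" "v \<in> Mv r" "w \<in> Mv r" shows "pf r (v + w) = pf r v + pf r w"
  using drepD(4)[OF assms(1)] assms(2,3) unfolding klin_def by blast
lemma dr_pe_sc: assumes "drep r" "v \<in> Mv r" shows "pe r (scv r c v) = scu r c (pe r v)"
  using drepD(3)[OF assms(1)] assms(2) unfolding klin_def by blast
lemma dr_pf_sc: assumes "drep r" "v \<in> Mv r" shows "pf r (scv r c v) = scv r c (pf r v)"
  using drepD(4)[OF assms(1)] assms(2) unfolding klin_def by blast
lemma dr_pe0: "drep r \<Longrightarrow> pe r 0 = 0"
  using addh0[OF kspace_grp[OF drepD(2)] klin_addh[OF drepD(3)]] by blast
lemma dr_pf0: "drep r \<Longrightarrow> pf r 0 = 0"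
  using addh0[OF kspace_grp[OF drepD(2)] klin_addh[OF drepD(4)]] by blast
lemma dr_inj: "drep r \<Longrightarrow> inj_on (pf r) (Mv r)"
  using drepD(5) unfolding bij_betw_def by blast
lemma dr_surj: "drep r \<Longrightarrow> pf r ` Mv r = Mv r"
  using drepD(5) unfolding bij_betw_def by blast

lemma pinv_in: assumes "drep r" "v \<in> Mv r" shows "pinv r v \<in> Mv r"
  unfolding pinv_def using the_inv_into_into[OF dr_inj[OF assms(1)], of v "Mv r"] dr_surj[OF assms(1)] assms(2) by simp
lemma pf_pinv: assumes "drep r" "v \<in> Mv r" shows "pf r (pinv r v) = v"
  unfolding pinv_def using f_the_inv_into_f[OF dr_inj[OF assms(1)], of v] dr_surj[OF assms(1)] assms(2) by simp
lemma pinv_pf: assumes "drep r" "v \<in> Mv r" shows "pinv r (pf r v) = v"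
  unfolding pinv_def using the_inv_into_f_f[OF dr_inj[OF assms(1)] assms(2)] .
lemma pinv_add: assumes "drep r" "v \<in> Mv r" "w \<in> Mv r" shows "pinv r (v + w) = pinv r v + pinv r w"
proof -
  have i: "pinv r v \<in> Mv r" "pinv r w \<in> Mv r" using pinv_in assms by blast+
  have s: "pinv r v + pinv r w \<in> Mv r" using kspaceD(2)[OF drepD(2)[OF assms(1)] i] .
  have "pf r (pinv r v + pinv r w) = v + w" using dr_pf_add[OF assms(1) i] pf_pinv[OF assms(1,2)] pf_pinv[OF assms(1,3)] by simp
  then show ?thesis using pinv_pf[OF assms(1) s] by simp
qed
lemma pinv_sc: assumes "drep r" "v \<in> Mv r" shows "pinv r (scv r c v) = scv r c (pinv r v)"
proof -
  have i: "pinv r v \<in> Mv r" using pinv_in assms by blast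
  have s: "scv r c (pinv r v) \<in> Mv r" using kspaceD(4)[OF drepD(2)[OF assms(1)] i] .
  have "pf r (scv r c (pinv r v)) = scv r c v" using dr_pf_sc[OF assms(1) i] pf_pinv[OF assms] by simp
  then show ?thesis using pinv_pf[OF assms(1) s] by simp
qed
lemma pinv0: assumes "drep r" shows "pinv r 0 = 0"
  using pinv_pf[OF assms kspaceD(1)[OF drepD(2)[OF assms]]] dr_pf0[OF assms] by simp

lemma pfpow_zero: assumes "drep r" shows "v \<in> Mv r \<Longrightarrow> (pf r ^^ N) v = 0 \<Longrightarrow> v = 0"
proof (induction N arbitrary: v)
  case 0 then show ?case by simp
next
  case (Suc N)
  have "(pf r ^^ N) (pf r v) = 0" using Suc.prems(2) by (simp add: funpow_swap1)
  then have "pf r v = 0" using Suc.IH dr_pf[OF assms Suc.prems(1)] by blast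
  then have "pf r v = pf r 0" using dr_pf0[OF assms] by simp
  then show "v = 0" using inj_onD[OF dr_inj[OF assms]] Suc.prems(1) kspaceD(1)[OF drepD(2)[OF assms]] by blast
qed

lemma supp_shift: fixes g :: "nat \<Rightarrow> 'a::zero" shows "finite {a. g a \<noteq> 0} \<Longrightarrow> finite {a. g (Suc a) \<noteq> 0}"
proof -
  assume f: "finite {a. g a \<noteq> 0}"
  have "{a. g (Suc a) \<noteq> 0} = Suc -` {a. g a \<noteq> 0}" by auto
  then show ?thesis using finite_vimageI[OF f inj_Suc] by simp
qed
lemma supp_unshift: fixes g :: "nat \<Rightarrow> 'a::zero" shows "finite {a. g a \<noteq> 0} \<Longrightarrow> finite {a. (if a = 0 then u else g (a - 1)) \<noteq> 0}"
proof -
  assume f: "finite {a. g a \<noteq> 0}"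
  have "{a. (if a = 0 then u else g (a - 1)) \<noteq> 0} \<subseteq> insert 0 (Suc ` {a. g a \<noteq> 0})"
  proof
    fix a assume "a \<in> {a. (if a = 0 then u else g (a - 1)) \<noteq> 0}"
    then show "a \<in> insert 0 (Suc ` {a. g a \<noteq> 0})" by (cases a) auto
  qed
  then show ?thesis using f finite_subset by blast
qed

lemma rmod_Psi: assumes "drep r" shows "is_rmod (Psi_mod r)"
proof -
  note U = drepD(1)[OF assms] and V = drepD(2)[OF assms]
  have ks: "kspace (sc (Psi_mod r)) (car (Psi_mod r))" unfolding Psi_car Psi_sc using kspace_P[OF U V] .
  have kx: "klin (sc (Psi_mod r)) (sc (Psi_mod r)) (car (Psi_mod r)) (car (Psi_mod r)) (xo (Psi_mod r))"
    unfolding klin_def Psi_car Psi_sc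
  proof (intro conjI ballI allI)
    show "xo (Psi_mod r) ` PC (Mu r) (Mv r) \<subseteq> PC (Mu r) (Mv r)"
    proof
      fix q assume "q \<in> xo (Psi_mod r) ` PC (Mu r) (Mv r)"
      then obtain g v where p: "(g, v) \<in> PC (Mu r) (Mv r)" "q = xo (Psi_mod r) (g, v)" by auto
      then have h: "(\<forall>a. g a \<in> Mu r) \<and> finite {a. g a \<noteq> 0} \<and> v \<in> Mv r" unfolding PC_iff by blast
      then have "(\<forall>a. g (Suc a) \<in> Mu r) \<and> finite {a. g (Suc a) \<noteq> 0} \<and> pf r v \<in> Mv r"
        using supp_shift dr_pf[OF assms] by blast
      then show "q \<in> PC (Mu r) (Mv r)" unfolding p Psi_xo PC_iff .
    qed
    show "xo (Psi_mod r) (p + q) = xo (Psi_mod r) p + xo (Psi_mod r) q"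
      if "p \<in> PC (Mu r) (Mv r)" "q \<in> PC (Mu r) (Mv r)" for p q
    proof -
      obtain g v h w where pq: "p = (g, v)" "q = (h, w)" by (cases p, cases q)
      have "v \<in> Mv r" "w \<in> Mv r" using that unfolding pq PC_iff by blast+
      then show ?thesis unfolding pq using dr_pf_add[OF assms] by (simp add: Psi_xo fun_eq_iff)
    qed
    show "xo (Psi_mod r) (psc (scu r) (scv r) c p) = psc (scu r) (scv r) c (xo (Psi_mod r) p)"
      if "p \<in> PC (Mu r) (Mv r)" for c p
    proof -
      obtain g v where pq: "p = (g, v)" by (cases p)
      have "v \<in> Mv r" using that unfolding pq PC_iff by blast+
      then show ?thesis unfolding pq using dr_pf_sc[OF assms] by (simp add: Psi_xo psc_Pair fun_eq_iff)
    qed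
  qed
  have ky: "klin (sc (Psi_mod r)) (sc (Psi_mod r)) (car (Psi_mod r)) (car (Psi_mod r)) (yo (Psi_mod r))"
    unfolding klin_def Psi_car Psi_sc
  proof (intro conjI ballI allI)
    show "yo (Psi_mod r) ` PC (Mu r) (Mv r) \<subseteq> PC (Mu r) (Mv r)"
    proof
      fix q assume "q \<in> yo (Psi_mod r) ` PC (Mu r) (Mv r)"
      then obtain g v where p: "(g, v) \<in> PC (Mu r) (Mv r)" "q = yo (Psi_mod r) (g, v)" by auto
      then have h: "(\<forall>a. g a \<in> Mu r) \<and> finite {a. g a \<noteq> 0} \<and> v \<in> Mv r" unfolding PC_iff by blast
      then have "(\<forall>a. (if a = 0 then pe r v else g (a - 1)) \<in> Mu r)" using dr_pe[OF assms] by simp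
      moreover have "finite {a. (if a = 0 then pe r v else g (a - 1)) \<noteq> 0}" using supp_unshift h by blast
      moreover have "pinv r v \<in> Mv r" using pinv_in[OF assms] h by blast
      ultimately show "q \<in> PC (Mu r) (Mv r)" unfolding p Psi_yo PC_iff by blast
    qed
    show "yo (Psi_mod r) (p + q) = yo (Psi_mod r) p + yo (Psi_mod r) q"
      if "p \<in> PC (Mu r) (Mv r)" "q \<in> PC (Mu r) (Mv r)" for p q
    proof -
      obtain g v h w where pq: "p = (g, v)" "q = (h, w)" by (cases p, cases q)
      have vw: "v \<in> Mv r" "w \<in> Mv r" using that unfolding pq PC_iff by blast+
      show ?thesis unfolding pq using dr_pe_add[OF assms vw] pinv_add[OF assms vw]
        by (simp add: Psi_yo fun_eq_iff)
    qed
    show "yo (Psi_mod r) (psc (scu r) (scv r) c p) = psc (scu r) (scv r) c (yo (Psi_mod r) p)"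
      if "p \<in> PC (Mu r) (Mv r)" for c p
    proof -
      obtain g v where pq: "p = (g, v)" by (cases p)
      have v: "v \<in> Mv r" using that unfolding pq PC_iff by blast+
      show ?thesis unfolding pq using dr_pe_sc[OF assms v] pinv_sc[OF assms v]
        by (simp add: Psi_yo psc_Pair fun_eq_iff)
    qed
  qed
  have xy: "xo (Psi_mod r) (yo (Psi_mod r) p) = p" if "p \<in> car (Psi_mod r)" for p
  proof -
    obtain g v where pq: "p = (g, v)" by (cases p)
    have v: "v \<in> Mv r" using that unfolding pq Psi_car PC_iff by blast+
    show ?thesis unfolding pq using pf_pinv[OF assms v] by (simp add: Psi_yo Psi_xo)
  qed
  show ?thesis unfolding is_rmod_def using ks kx ky xy by blast
qed



lemma Psi_xpow: "(xo (Psi_mod r) ^^ N) (g, v) = (\<lambda>a. g (a + N), (pf r ^^ N) v)"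
proof (induction N)
  case 0 then show ?case by simp
next
  case (Suc N) then show ?case by (simp add: Psi_xo)
qed

lemma pfpow0: "drep r \<Longrightarrow> (pf r ^^ N) 0 = 0"
  by (induction N) (simp_all add: dr_pf0)

lemma PC_0v: assumes "drep r" "v \<in> Mv r" shows "(0, v) \<in> PC (Mu r) (Mv r)"
  unfolding PC_iff using kspaceD(1)[OF drepD(1)[OF assms(1)]] assms(2) by simp

lemma IM_Psi: assumes "drep r" shows "IM (Psi_mod r) = {p \<in> PC (Mu r) (Mv r). snd p = 0}"
proof -
  have R: "is_rmod (Psi_mod r)" using rmod_Psi[OF assms] .
  have "p \<in> nil (Psi_mod r) \<longleftrightarrow> p \<in> PC (Mu r) (Mv r) \<and> snd p = 0" for p
  proof -
    obtain g v where pq: "p = (g, v)" by (cases p)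
    show ?thesis
    proof
      assume "p \<in> nil (Psi_mod r)"
      from nilD[OF this] obtain N where N: "(xo (Psi_mod r) ^^ N) (g, v) = 0" "(g, v) \<in> PC (Mu r) (Mv r)"
        unfolding pq Psi_car by blast
      then have "(pf r ^^ N) v = 0" unfolding Psi_xpow zero_pair by simp
      then have "v = 0" using pfpow_zero[OF assms] N(2) unfolding PC_iff by blast
      then show "p \<in> PC (Mu r) (Mv r) \<and> snd p = 0" using N(2) pq by simp
    next
      assume a: "p \<in> PC (Mu r) (Mv r) \<and> snd p = 0"
      then have v: "v = 0" and f: "finite {a. g a \<noteq> 0}"
        unfolding pq PC_iff by simp_all
      have pc: "(g, v) \<in> PC (Mu r) (Mv r)" using a unfolding pq by blast
      obtain N where N: "\<forall>n\<in>{a. g a \<noteq> 0}. n < N" using f finite_nat_set_iff_bounded by blast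
      have "(\<lambda>a. g (a + N)) = 0" using N by (auto simp: fun_eq_iff)
      then have "(xo (Psi_mod r) ^^ N) (g, v) = 0" unfolding Psi_xpow zero_pair v using pfpow0[OF assms] by simp
      moreover have "(g, v) \<in> car (Psi_mod r)" using pc unfolding Psi_car .
      ultimately show "p \<in> nil (Psi_mod r)" using nilI unfolding pq by blast
    qed
  qed
  then show ?thesis using IM_nil[OF R] by blast
qed

lemma Psi_alpha_cos: assumes "drep r" shows "Psi_alpha (cos (IM (Psi_mod r)) m) = (0, snd m)"
proof -
  have z: "(0::(nat \<Rightarrow> 'b) \<times> 'c) \<in> IM (Psi_mod r)"
    unfolding IM_Psi[OF assms] using PC_0v[OF assms kspaceD(1)[OF drepD(2)[OF assms]]] by (simp add: zero_prod_def)
  have ex: "\<exists>p. p \<in> cos (IM (Psi_mod r)) m" unfolding cos_def using z by blast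
  have "snd p = snd m" if pin: "p \<in> cos (IM (Psi_mod r)) m" for p
  proof -
    obtain n where n: "n \<in> IM (Psi_mod r)" "p = m + n" using pin unfolding cos_def by blast
    then show ?thesis unfolding IM_Psi[OF assms] by simp
  qed
  then show ?thesis unfolding Psi_alpha_def using someI_ex[OF ex] by simp
qed

lemma PP_Psi: "drep r \<Longrightarrow> PP (Psi_mod r) Psi_alpha m = (0, snd m)"
  unfolding PP_def using Psi_alpha_cos by blast

lemma wsp_Psi: assumes "drep r" shows "wsp (Psi_mod r) Psi_alpha"
proof -
  have R: "is_rmod (Psi_mod r)" using rmod_Psi[OF assms] .
  have a: "Psi_alpha (cos (IM (Psi_mod r)) m) = (0, snd m)" for m using Psi_alpha_cos[OF assms] .
  have c1: "Psi_alpha (cos (IM (Psi_mod r)) m) \<in> car (Psi_mod r)" if "m \<in> car (Psi_mod r)" for m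
  proof -
    obtain g v where pq: "m = (g, v)" by (cases m)
    have "v \<in> Mv r" using that unfolding pq Psi_car PC_iff by simp
    then show ?thesis using PC_0v[OF assms] unfolding a pq Psi_car by simp
  qed
  have c2: "Psi_alpha (cos (IM (Psi_mod r)) m) - m \<in> IM (Psi_mod r)" if "m \<in> car (Psi_mod r)" for m
  proof -
    obtain g v where pq: "m = (g, v)" by (cases m)
    have h: "(\<forall>a. g a \<in> Mu r) \<and> finite {a. g a \<noteq> 0}" using that unfolding pq Psi_car PC_iff by blast
    have "{a. - g a \<noteq> 0} = {a. g a \<noteq> 0}" by simp
    then have "(\<forall>a. - g a \<in> Mu r) \<and> finite {a. - g a \<noteq> 0}"
      using h kspaceD(3)[OF drepD(1)[OF assms]] by simp
    then have "(- g, 0) \<in> PC (Mu r) (Mv r)" unfolding PC_iff using kspaceD(1)[OF drepD(2)[OF assms]] by simp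
    then show ?thesis unfolding pq a unfolding IM_Psi[OF assms] by simp
  qed
  have c3: "Psi_alpha (cos (IM (Psi_mod r)) (m1 + m2)) = Psi_alpha (cos (IM (Psi_mod r)) m1) + Psi_alpha (cos (IM (Psi_mod r)) m2)" for m1 m2
    unfolding a by simp
  have c4: "Psi_alpha (cos (IM (Psi_mod r)) (sc (Psi_mod r) c m)) = sc (Psi_mod r) c (Psi_alpha (cos (IM (Psi_mod r)) m))" for c m
  proof -
    obtain g v where pq: "m = (g, v)" by (cases m)
    show ?thesis unfolding a pq Psi_sc psc_Pair using kspace_sc0[OF drepD(1)[OF assms]] by (simp add: fun_eq_iff)
  qed
  have c5: "Psi_alpha (cos (IM (Psi_mod r)) (xo (Psi_mod r) m)) = xo (Psi_mod r) (Psi_alpha (cos (IM (Psi_mod r)) m))" for m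
  proof -
    obtain g v where pq: "m = (g, v)" by (cases m)
    show ?thesis unfolding a pq Psi_xo by (simp add: fun_eq_iff zero_fun_def)
  qed
  show ?thesis unfolding wsp_def using R c1 c2 c3 c4 c5 by blast
qed

lemma imal_Psi: assumes "drep r" shows "imal (Psi_mod r) Psi_alpha = {(0, v) | v. v \<in> Mv r}"
proof -
  have "imal (Psi_mod r) Psi_alpha = (\<lambda>m. (0, snd m)) ` PC (Mu r) (Mv r)"
    unfolding imal_eq PP_Psi[OF assms] Psi_car ..
  also have "\<dots> = {(0, v) | v. v \<in> Mv r}"
  proof
    show "(\<lambda>m. (0, snd m)) ` PC (Mu r) (Mv r) \<subseteq> {(0, v) |v. v \<in> Mv r}"
      unfolding PC_def by auto
    show "{(0, v) |v. v \<in> Mv r} \<subseteq> (\<lambda>m. (0, snd m)) ` PC (Mu r) (Mv r)"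
    proof
      fix p assume "p \<in> {(0, v) |v. v \<in> Mv r}"
      then obtain v where v: "v \<in> Mv r" "p = (0, v)" by blast
      then show "p \<in> (\<lambda>m. (0, snd m)) ` PC (Mu r) (Mv r)" using PC_0v[OF assms v(1)] by force
    qed
  qed
  finally show ?thesis .
qed

lemma cobj_Psi: "drep r \<Longrightarrow> cobj (Psi r)"
  unfolding cobj_def Psi_def using wsp_Psi by simp



lemma dmorD: assumes "dmor r s f"
  shows "klin (scu r) (scu s) (Mu r) (Mu s) (fst f)" "klin (scv r) (scv s) (Mv r) (Mv s) (snd f)"
    "v \<in> Mv r \<Longrightarrow> fst f (pe r v) = pe s (snd f v)" "v \<in> Mv r \<Longrightarrow> snd f (pf r v) = pf s (snd f v)"
  using assms unfolding dmor_def by blast+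

lemma dm_u0: "drep r \<Longrightarrow> dmor r s f \<Longrightarrow> fst f 0 = 0"
  using addh0[OF kspace_grp[OF drepD(1)] klin_addh[OF dmorD(1)]] by blast
lemma dm_v0: "drep r \<Longrightarrow> dmor r s f \<Longrightarrow> snd f 0 = 0"
  using addh0[OF kspace_grp[OF drepD(2)] klin_addh[OF dmorD(2)]] by blast
lemma dm_u: "dmor r s f \<Longrightarrow> u \<in> Mu r \<Longrightarrow> fst f u \<in> Mu s"
  using dmorD(1) unfolding klin_def by blast
lemma dm_v: "dmor r s f \<Longrightarrow> v \<in> Mv r \<Longrightarrow> snd f v \<in> Mv s"
  using dmorD(2) unfolding klin_def by blast
lemma dm_uadd: "dmor r s f \<Longrightarrow> u \<in> Mu r \<Longrightarrow> u' \<in> Mu r \<Longrightarrow> fst f (u + u') = fst f u + fst f u'"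
  using dmorD(1) unfolding klin_def by blast
lemma dm_vadd: "dmor r s f \<Longrightarrow> v \<in> Mv r \<Longrightarrow> v' \<in> Mv r \<Longrightarrow> snd f (v + v') = snd f v + snd f v'"
  using dmorD(2) unfolding klin_def by blast
lemma dm_usc: "dmor r s f \<Longrightarrow> u \<in> Mu r \<Longrightarrow> fst f (scu r c u) = scu s c (fst f u)"
  using dmorD(1) unfolding klin_def by blast
lemma dm_vsc: "dmor r s f \<Longrightarrow> v \<in> Mv r \<Longrightarrow> snd f (scv r c v) = scv s c (snd f v)"
  using dmorD(2) unfolding klin_def by blast

lemma dm_pinv: assumes "drep r" "drep s" "dmor r s f" "v \<in> Mv r"
  shows "snd f (pinv r v) = pinv s (snd f v)"
proof -
  have i: "pinv r v \<in> Mv r" using pinv_in[OF assms(1,4)] .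
  have "pinv s (snd f v) = pinv s (snd f (pf r (pinv r v)))" using pf_pinv[OF assms(1,4)] by simp
  also have "\<dots> = pinv s (pf s (snd f (pinv r v)))" using dmorD(4)[OF assms(3) i] by simp
  also have "\<dots> = snd f (pinv r v)" using pinv_pf[OF assms(2) dm_v[OF assms(3) i]] .
  finally show ?thesis by simp
qed

lemma PsiM_Pair: "PsiM f (g, v) = (fst f \<circ> g, snd f v)" unfolding PsiM_def by simp

lemma cmor_PsiM: assumes "drep r" "drep s" "dmor r s f" shows "cmor (Psi r) (Psi s) (PsiM f)"
proof -
  have f0: "fst f 0 = 0" using dm_u0[OF assms(1,3)] .
  have kl: "klin (sc (Psi_mod r)) (sc (Psi_mod s)) (car (Psi_mod r)) (car (Psi_mod s)) (PsiM f)"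
    unfolding klin_def Psi_car Psi_sc
  proof (intro conjI ballI allI)
    show "PsiM f ` PC (Mu r) (Mv r) \<subseteq> PC (Mu s) (Mv s)"
    proof
      fix q assume "q \<in> PsiM f ` PC (Mu r) (Mv r)"
      then obtain g v where p: "(g, v) \<in> PC (Mu r) (Mv r)" "q = PsiM f (g, v)" by auto
      then have h: "(\<forall>a. g a \<in> Mu r) \<and> finite {a. g a \<noteq> 0} \<and> v \<in> Mv r" unfolding PC_iff by blast
      then have "(\<forall>a. fst f (g a) \<in> Mu s) \<and> finite {a. fst f (g a) \<noteq> 0} \<and> snd f v \<in> Mv s"
        using dm_u[OF assms(3)] dm_v[OF assms(3)] supp_map[of g "fst f"] f0 by blast
      then show "q \<in> PC (Mu s) (Mv s)" unfolding p PsiM_Pair PC_iff by simp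
    qed
    show "PsiM f (p + q) = PsiM f p + PsiM f q" if "p \<in> PC (Mu r) (Mv r)" "q \<in> PC (Mu r) (Mv r)" for p q
    proof -
      obtain g v h w where pq: "p = (g, v)" "q = (h, w)" by (cases p, cases q)
      have "(\<forall>a. g a \<in> Mu r) \<and> v \<in> Mv r" "(\<forall>a. h a \<in> Mu r) \<and> w \<in> Mv r"
        using that unfolding pq PC_iff by blast+
      then show ?thesis unfolding pq using dm_uadd[OF assms(3)] dm_vadd[OF assms(3)]
        by (simp add: PsiM_Pair fun_eq_iff)
    qed
    show "PsiM f (psc (scu r) (scv r) c p) = psc (scu s) (scv s) c (PsiM f p)" if "p \<in> PC (Mu r) (Mv r)" for c p
    proof -
      obtain g v where pq: "p = (g, v)" by (cases p)
      have "(\<forall>a. g a \<in> Mu r) \<and> v \<in> Mv r" using that unfolding pq PC_iff by blast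
      then show ?thesis unfolding pq using dm_usc[OF assms(3)] dm_vsc[OF assms(3)]
        by (simp add: PsiM_Pair psc_Pair fun_eq_iff)
    qed
  qed
  have cx: "PsiM f (xo (Psi_mod r) p) = xo (Psi_mod s) (PsiM f p)" if "p \<in> car (Psi_mod r)" for p
  proof -
    obtain g v where pq: "p = (g, v)" by (cases p)
    have "v \<in> Mv r" using that unfolding pq Psi_car PC_iff by blast
    then show ?thesis unfolding pq using dmorD(4)[OF assms(3)] by (simp add: PsiM_Pair Psi_xo fun_eq_iff)
  qed
  have cy: "PsiM f (yo (Psi_mod r) p) = yo (Psi_mod s) (PsiM f p)" if "p \<in> car (Psi_mod r)" for p
  proof -
    obtain g v where pq: "p = (g, v)" by (cases p)
    have v: "v \<in> Mv r" using that unfolding pq Psi_car PC_iff by blast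
    show ?thesis unfolding pq using dmorD(3)[OF assms(3) v] dm_pinv[OF assms v]
      by (simp add: PsiM_Pair Psi_yo fun_eq_iff)
  qed
  have im: "PsiM f ` imal (Psi_mod r) Psi_alpha \<subseteq> imal (Psi_mod s) Psi_alpha"
    unfolding imal_Psi[OF assms(1)] imal_Psi[OF assms(2)]
  proof
    fix q assume "q \<in> PsiM f ` {(0, v) |v. v \<in> Mv r}"
    then obtain v where v: "v \<in> Mv r" "q = PsiM f (0, v)" by blast
    have "q = (0, snd f v)" using v(2) f0 by (simp add: PsiM_Pair comp_def zero_fun_def)
    then show "q \<in> {(0, v) |v. v \<in> Mv s}" using dm_v[OF assms(3) v(1)] by blast
  qed
  show ?thesis unfolding cmor_def Psi_def rlin_def using kl cx cy im by simp
qed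



definition d0 :: "'u::zero \<Rightarrow> nat \<Rightarrow> 'u" where "d0 u = (\<lambda>a. if a = 0 then u else 0)"

definition eta :: "('k, 'u::ab_group_add, 'v::ab_group_add) rep \<Rightarrow> ('u \<Rightarrow> (nat \<Rightarrow> 'u) \<times> 'v) \<times> ('v \<Rightarrow> (nat \<Rightarrow> 'u) \<times> 'v)" where
  "eta r = (\<lambda>u. (d0 u, 0), \<lambda>v. (0, v))"

lemma Xi_Psi_simps: "Mu (Xi (Psi r)) = {m \<in> car (Psi_mod r). xo (Psi_mod r) m = 0}"
  "Mv (Xi (Psi r)) = imal (Psi_mod r) Psi_alpha"
  "scu (Xi (Psi r)) = sc (Psi_mod r)" "scv (Xi (Psi r)) = sc (Psi_mod r)" "pf (Xi (Psi r)) = xo (Psi_mod r)"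
  unfolding Psi_def Xi_simps by simp_all

lemma pe_XiPsi: assumes "drep r" "v \<in> Mv r" shows "pe (Xi (Psi r)) (0, v) = (d0 (pe r v), 0)"
proof -
  have "(0, v) \<in> car (Psi_mod r)" unfolding Psi_car using PC_0v[OF assms] .
  then have "pe (Xi (Psi r)) (0, v) = yo (Psi_mod r) (0, v) - PP (Psi_mod r) Psi_alpha (yo (Psi_mod r) (0, v))"
    unfolding Psi_def using Xi_pe[OF wsp_Psi[OF assms(1)]] by blast
  then show ?thesis unfolding PP_Psi[OF assms(1)] Psi_yo d0_def by (simp add: fun_eq_iff)
qed

lemma d0_PC: assumes "drep r" "u \<in> Mu r" shows "(d0 u, 0) \<in> PC (Mu r) (Mv r)"
proof -
  have "finite {a. d0 u a \<noteq> 0}" by (rule finite_subset[of _ "{0}"]) (auto simp: d0_def)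
  moreover have "\<forall>a. d0 u a \<in> Mu r" using assms(2) kspaceD(1)[OF drepD(1)[OF assms(1)]] by (simp add: d0_def)
  ultimately show ?thesis unfolding PC_iff using kspaceD(1)[OF drepD(2)[OF assms(1)]] by blast
qed

lemma eta_diso: fixes r :: "('k::field, 'u::ab_group_add, 'v::ab_group_add) rep"
  assumes "drep r" shows "diso r (Xi (Psi r)) (eta r)"
proof -
  note U = drepD(1)[OF assms] and V = drepD(2)[OF assms]
  have muX: "Mu (Xi (Psi r)) = {m \<in> PC (Mu r) (Mv r). xo (Psi_mod r) m = 0}" unfolding Xi_Psi_simps Psi_car ..
  have mvX: "Mv (Xi (Psi r)) = {(0, v) |v. v \<in> Mv r}" unfolding Xi_Psi_simps imal_Psi[OF assms] ..
  have scX: "scu (Xi (Psi r)) = psc (scu r) (scv r)" "scv (Xi (Psi r)) = psc (scu r) (scv r)"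
    unfolding Xi_Psi_simps Psi_sc by simp_all
  have sc0: "scu r c 0 = 0" "scv r c 0 = 0" for c using kspace_sc0[OF U] kspace_sc0[OF V] by blast+
  have k1: "klin (scu r) (scu (Xi (Psi r))) (Mu r) (Mu (Xi (Psi r))) (fst (eta r))"
    unfolding klin_def muX scX eta_def fst_conv
  proof (intro conjI ballI allI)
    show "(\<lambda>u. (d0 u, 0::'v)) ` Mu r \<subseteq> {m \<in> PC (Mu r) (Mv r). xo (Psi_mod r) m = 0}"
    proof
      fix q assume "q \<in> (\<lambda>u. (d0 u, 0::'v)) ` Mu r"
      then obtain u where u: "u \<in> Mu r" "q = (d0 u, 0)" by blast
      have "xo (Psi_mod r) (d0 u, 0) = 0" unfolding Psi_xo d0_def zero_pair using dr_pf0[OF assms]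
        by (simp add: fun_eq_iff)
      then show "q \<in> {m \<in> PC (Mu r) (Mv r). xo (Psi_mod r) m = 0}" using d0_PC[OF assms u(1)] u(2) by simp
    qed
    show "(d0 (a + b), 0::'v) = (d0 a, 0) + (d0 b, 0)" for a b :: 'u
    proof -
      have "d0 (a + b) = d0 a + d0 b" unfolding d0_def plus_fun_def by (rule ext) simp
      then show ?thesis by simp
    qed
    show "(d0 (scu r c a), 0::'v) = psc (scu r) (scv r) c (d0 a, 0)" for c a
      by (simp add: d0_def fun_eq_iff psc_Pair sc0)
  qed
  have k2: "klin (scv r) (scv (Xi (Psi r))) (Mv r) (Mv (Xi (Psi r))) (snd (eta r))"
    unfolding klin_def mvX scX eta_def snd_conv
  proof (intro conjI ballI allI)
    show "(\<lambda>v. (0::nat\<Rightarrow>'u, v)) ` Mv r \<subseteq> {(0, v) |v. v \<in> Mv r}" by blast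
    show "(0::nat\<Rightarrow>'u, a + b) = (0, a) + (0, b)" for a b :: 'v by simp
    show "(0::nat\<Rightarrow>'u, scv r c a) = psc (scu r) (scv r) c (0, a)" for c a
      by (simp add: fun_eq_iff psc_Pair sc0)
  qed
  have k3: "\<forall>v\<in>Mv r. fst (eta r) (pe r v) = pe (Xi (Psi r)) (snd (eta r) v)
      \<and> snd (eta r) (pf r v) = pf (Xi (Psi r)) (snd (eta r) v)"
  proof
    fix v assume v: "v \<in> Mv r"
    show "fst (eta r) (pe r v) = pe (Xi (Psi r)) (snd (eta r) v)
      \<and> snd (eta r) (pf r v) = pf (Xi (Psi r)) (snd (eta r) v)"
      unfolding eta_def fst_conv snd_conv pe_XiPsi[OF assms v] Xi_Psi_simps Psi_xo
      by (simp add: fun_eq_iff zero_fun_def)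
  qed
  define g where "g = ((\<lambda>p. fst p 0) :: (nat \<Rightarrow> 'u) \<times> 'v \<Rightarrow> 'u, snd :: (nat \<Rightarrow> 'u) \<times> 'v \<Rightarrow> 'v)"
  have j1: "klin (scu (Xi (Psi r))) (scu r) (Mu (Xi (Psi r))) (Mu r) (fst g)"
    unfolding klin_def muX scX g_def fst_conv
  proof (intro conjI ballI allI)
    show "(\<lambda>p. fst p 0) ` {m \<in> PC (Mu r) (Mv r). xo (Psi_mod r) m = 0} \<subseteq> Mu r"
      unfolding PC_def by auto
    show "fst (p + q) 0 = fst p 0 + fst q 0" for p q :: "(nat \<Rightarrow> 'u) \<times> 'v" by simp
    show "fst (psc (scu r) (scv r) c p) 0 = scu r c (fst p 0)" for c p
      by (cases p) (simp add: psc_Pair)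
  qed
  have j2: "klin (scv (Xi (Psi r))) (scv r) (Mv (Xi (Psi r))) (Mv r) (snd g)"
    unfolding klin_def mvX scX g_def snd_conv
  proof (intro conjI ballI allI)
    show "snd ` {(0, v) |v. v \<in> Mv r} \<subseteq> Mv r" by auto
    show "snd (p + q) = snd p + snd q" for p q :: "(nat \<Rightarrow> 'u) \<times> 'v" by simp
    show "snd (psc (scu r) (scv r) c p) = scv r c (snd p)" for c p
      by (cases p) (simp add: psc_Pair)
  qed
  have j3: "\<forall>w\<in>Mv (Xi (Psi r)). fst g (pe (Xi (Psi r)) w) = pe r (snd g w)
      \<and> snd g (pf (Xi (Psi r)) w) = pf r (snd g w)"
  proof
    fix w assume "w \<in> Mv (Xi (Psi r))"
    then obtain v where v: "v \<in> Mv r" "w = (0, v)" unfolding mvX by blast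
    show "fst g (pe (Xi (Psi r)) w) = pe r (snd g w) \<and> snd g (pf (Xi (Psi r)) w) = pf r (snd g w)"
      unfolding v(2) g_def fst_conv snd_conv pe_XiPsi[OF assms v(1)] Xi_Psi_simps Psi_xo
      by (simp add: d0_def)
  qed
  have r1: "\<forall>a\<in>Mu r. fst g (fst (eta r) a) = a" unfolding g_def eta_def by (simp add: d0_def)
  have r2: "\<forall>a\<in>Mv r. snd g (snd (eta r) a) = a" unfolding g_def eta_def by simp
  have r3: "\<forall>b\<in>Mu (Xi (Psi r)). fst (eta r) (fst g b) = b"
  proof
    fix b assume "b \<in> Mu (Xi (Psi r))"
    then have b: "b \<in> PC (Mu r) (Mv r)" "xo (Psi_mod r) b = 0" unfolding muX by blast+
    obtain h w where hw: "b = (h, w)" by (cases b)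
    have "(\<lambda>a. h (Suc a), pf r w) = (0, 0)" using b(2) unfolding hw Psi_xo zero_pair .
    then have hs: "\<And>a. h (Suc a) = 0" and pw: "pf r w = 0" by (simp_all add: fun_eq_iff)
    have wv: "w \<in> Mv r" using b(1) unfolding hw PC_iff by blast
    have "(pf r ^^ 1) w = 0" using pw by simp
    then have w0: "w = 0" using pfpow_zero[OF assms wv] by blast
    have "d0 (h 0) = h" unfolding d0_def
    proof
      fix a show "(if a = 0 then h 0 else 0) = h a" using hs by (cases a) auto
    qed
    then show "fst (eta r) (fst g b) = b" unfolding g_def eta_def hw w0 by simp
  qed
  have r4: "\<forall>b\<in>Mv (Xi (Psi r)). snd (eta r) (snd g b) = b" unfolding mvX g_def eta_def by auto
  show ?thesis unfolding diso_def dmor_def using k1 k2 k3 j1 j2 j3 r1 r2 r3 r4 by blast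
qed

lemma eta_nat: assumes "drep r" "drep s" "dmor r s f"
  shows "(\<forall>a\<in>Mu r. fst (XiM (PsiM f)) (fst (eta r) a) = fst (eta s) (fst f a))
     \<and> (\<forall>a\<in>Mv r. snd (XiM (PsiM f)) (snd (eta r) a) = snd (eta s) (snd f a))"
proof -
  have f0: "fst f 0 = 0" "snd f 0 = 0" using dm_u0[OF assms(1,3)] dm_v0[OF assms(1,3)] by blast+
  show ?thesis unfolding XiM_def eta_def fst_conv snd_conv PsiM_Pair using f0
    by (simp add: fun_eq_iff d0_def)
qed



lemma bound_ex: "finite {a::nat. g a \<noteq> 0} \<Longrightarrow> \<exists>N. \<forall>a\<ge>N. g a = 0"
proof -
  assume "finite {a::nat. g a \<noteq> 0}"
  then obtain N where N: "\<forall>n\<in>{a. g a \<noteq> 0}. n < N" using finite_nat_set_iff_bounded by blast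
  have "\<forall>a\<ge>N. g a = 0"
  proof (intro allI impI)
    fix a assume a: "a \<ge> N"
    show "g a = 0"
    proof (rule ccontr)
      assume "g a \<noteq> 0" then have "a < N" using N by blast
      then show False using a by simp
    qed
  qed
  then show ?thesis by blast
qed

lemma esum_lt: assumes "is_rmod M" "\<And>a. g a \<in> car M" "\<And>a. a \<ge> N \<Longrightarrow> g a = 0"
  shows "(\<Sum>a\<in>{a. g a \<noteq> 0}. (yo M ^^ a) (g a)) = (\<Sum>a<N. (yo M ^^ a) (g a))"
proof (rule sum.mono_neutral_left)
  show "finite {..<N}" by simp
  show "{a. g a \<noteq> 0} \<subseteq> {..<N}"
  proof
    fix a assume "a \<in> {a. g a \<noteq> 0}"
    then have "\<not> a \<ge> N" using assms(3) by auto
    then show "a \<in> {..<N}" by simp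
  qed
  show "\<forall>i\<in>{..<N} - {a. g a \<noteq> 0}. (yo M ^^ i) (g i) = 0" using rmod_ypow0[OF assms(1)] by simp
qed

definition eps :: "('k::field, 'm::ab_group_add) cob \<Rightarrow> (nat \<Rightarrow> 'm) \<times> 'm \<Rightarrow> 'm" where
  "eps A p = snd p + (\<Sum>a\<in>{a. fst p a \<noteq> 0}. (yo (fst A) ^^ a) (fst p a))"

lemma eps_lt: assumes "is_rmod M" "\<And>a. g a \<in> car M" "\<And>a. a \<ge> N \<Longrightarrow> g a = 0"
  shows "eps (M, \<alpha>) (g, v) = v + (\<Sum>a<N. (yo M ^^ a) (g a))"
  unfolding eps_def using esum_lt[OF assms] by simp

lemma ysum_car: assumes "is_rmod M" "\<And>a. g a \<in> car M" shows "(\<Sum>a<N. (yo M ^^ a) (g a)) \<in> car M"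
  by (rule grp_sum[OF rmod_grp[OF assms(1)]], rule rmod_ypow(2)[OF assms(1) assms(2)])

context
  fixes M :: "('k::field, 'm::ab_group_add) rmod" and \<alpha>
  assumes W: "wsp M \<alpha>"
begin

abbreviation "rr \<equiv> Xi (M, \<alpha>)"

lemma RM: "is_rmod M"
  using wsp_rmod[OF W] .
lemma GM: "grp (car M)"
  using rmod_grp[OF RM] .
lemma DR: "drep rr"
  using drep_Xi[OF W] .

lemma PXcar: "car (Psi_mod rr) = PC {m \<in> car M. xo M m = 0} (imal M \<alpha>)"
  unfolding Psi_car Xi_simps ..

lemma pinv_X: assumes "v \<in> imal M \<alpha>" shows "pinv rr v = PP M \<alpha> (yo M v)"
proof -
  have vc: "v \<in> car M" using imal_car[OF W assms] .
  have yc: "yo M v \<in> car M" using rmod_yc[OF RM vc] .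
  have w: "PP M \<alpha> (yo M v) \<in> Mv rr" unfolding Xi_simps imal_eq using yc by blast
  have "pf rr (PP M \<alpha> (yo M v)) = v" unfolding Xi_simps using P_x[OF W yc] rmod_xy[OF RM vc] imal_P[OF W assms] by simp
  then show ?thesis using pinv_pf[OF DR w] by simp
qed

lemma PXyo: assumes "v \<in> imal M \<alpha>"
  shows "yo (Psi_mod rr) (g, v) = (\<lambda>a. if a = 0 then yo M v - PP M \<alpha> (yo M v) else g (a - 1), PP M \<alpha> (yo M v))"
  unfolding Psi_yo pinv_X[OF assms] Xi_pe[OF W imal_car[OF W assms]] ..

lemma PXxo: "xo (Psi_mod rr) (g, v) = (\<lambda>a. g (Suc a), xo M v)"
  unfolding Psi_xo Xi_simps ..

lemma PXsc: "sc (Psi_mod rr) = psc (sc M) (sc M)"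
  unfolding Psi_sc Xi_simps ..

lemma PCD: assumes "(g, v) \<in> PC {m \<in> car M. xo M m = 0} (imal M \<alpha>)"
  shows "\<And>a. g a \<in> car M" "\<And>a. xo M (g a) = 0" "finite {a. g a \<noteq> 0}" "v \<in> imal M \<alpha>" "v \<in> car M"
proof -
  have h: "(\<forall>a. g a \<in> {m \<in> car M. xo M m = 0}) \<and> finite {a. g a \<noteq> 0} \<and> v \<in> imal M \<alpha>"
    using assms unfolding PC_iff .
  then show "\<And>a. g a \<in> car M" "\<And>a. xo M (g a) = 0" "finite {a. g a \<noteq> 0}" "v \<in> imal M \<alpha>"
    by simp_all
  show "v \<in> car M" using imal_car[OF W] h by blast
qed

lemma eps_car: assumes "p \<in> car (Psi_mod rr)" shows "eps (M, \<alpha>) p \<in> car M"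
proof -
  obtain g v where pq: "p = (g, v)" by (cases p)
  note d = PCD[OF assms[unfolded pq PXcar]]
  obtain N where N: "\<And>a. a \<ge> N \<Longrightarrow> g a = 0" using bound_ex[OF d(3)] by blast
  have gc: "\<And>a. g a \<in> car M" using d(1) .
  have s: "(\<Sum>a<N. (yo M ^^ a) (g a)) \<in> car M" using ysum_car[OF RM gc, where N=N] .
  have "v + (\<Sum>a<N. (yo M ^^ a) (g a)) \<in> car M" using grpD(2)[OF GM d(5) s] .
  moreover have "eps (M, \<alpha>) (g, v) = v + (\<Sum>a<N. (yo M ^^ a) (g a))" by (rule eps_lt[OF RM gc N])
  ultimately show ?thesis unfolding pq by simp
qed

lemma eps_N: assumes "(g, v) \<in> car (Psi_mod rr)" "\<And>a. a \<ge> N \<Longrightarrow> g a = 0"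
  shows "eps (M, \<alpha>) (g, v) = v + (\<Sum>a<N. (yo M ^^ a) (g a))"
proof -
  note d = PCD[OF assms(1)[unfolded PXcar]]
  have gc: "\<And>a. g a \<in> car M" using d(1) .
  show ?thesis by (rule eps_lt[OF RM gc assms(2)])
qed

lemma PX_rmod: "is_rmod (Psi_mod rr)" using rmod_Psi[OF DR] .

lemma xyS: "w \<in> car M \<Longrightarrow> xo M ((yo M ^^ Suc a) w) = (yo M ^^ a) w"
  using rmod_xy[OF RM rmod_ypow(2)[OF RM]] by simp

lemma ypow_add: "a \<in> car M \<Longrightarrow> b \<in> car M \<Longrightarrow> (yo M ^^ n) (a + b) = (yo M ^^ n) a + (yo M ^^ n) b"
  using addhD(1)[OF GM rmod_ypow(1)[OF RM]] by blast

lemma eps_rlin: "rlin (Psi_mod rr) M (eps (M, \<alpha>))"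
proof -
  have R: "is_rmod (Psi_mod rr)" using PX_rmod .
  have ks: "kspace (sc M) (car M)" using rmod_ks[OF RM] .
  have add: "eps (M, \<alpha>) (p + q) = eps (M, \<alpha>) p + eps (M, \<alpha>) q"
    if pq: "p \<in> car (Psi_mod rr)" "q \<in> car (Psi_mod rr)" for p q
  proof -
    obtain g v h w where e: "p = (g, v)" "q = (h, w)" by (cases p, cases q)
    note d1 = PCD[OF pq(1)[unfolded e PXcar]] and d2 = PCD[OF pq(2)[unfolded e PXcar]]
    obtain N1 where N1: "\<And>a. a \<ge> N1 \<Longrightarrow> g a = 0" using bound_ex[OF d1(3)] by blast
    obtain N2 where N2: "\<And>a. a \<ge> N2 \<Longrightarrow> h a = 0" using bound_ex[OF d2(3)] by blast
    have Ng: "\<And>a. a \<ge> N1 + N2 \<Longrightarrow> g a = 0" using N1 by simp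
    have Nh: "\<And>a. a \<ge> N1 + N2 \<Longrightarrow> h a = 0" using N2 by simp
    have Ngh: "\<And>a. a \<ge> N1 + N2 \<Longrightarrow> (g + h) a = 0" using Ng Nh by simp
    have pqc: "(g + h, v + w) \<in> car (Psi_mod rr)"
      using kspaceD(2)[OF rmod_ks[OF R] pq] unfolding e by simp
    have "eps (M, \<alpha>) (p + q) = (v + w) + (\<Sum>a<N1 + N2. (yo M ^^ a) ((g + h) a))"
      unfolding e using eps_N[where N="N1 + N2", OF pqc Ngh] by (simp add: plus_fun_def)
    also have "\<dots> = (v + w) + (\<Sum>a<N1 + N2. (yo M ^^ a) (g a) + (yo M ^^ a) (h a))"
      using ypow_add[OF d1(1) d2(1)] by simp
    also have "\<dots> = (v + (\<Sum>a<N1 + N2. (yo M ^^ a) (g a))) + (w + (\<Sum>a<N1 + N2. (yo M ^^ a) (h a)))"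
      by (simp add: sum.distrib algebra_simps)
    also have "\<dots> = eps (M, \<alpha>) p + eps (M, \<alpha>) q"
      unfolding e using eps_N[OF pq(1)[unfolded e] Ng] eps_N[OF pq(2)[unfolded e] Nh] by simp
    finally show ?thesis .
  qed
  have scl: "eps (M, \<alpha>) (sc (Psi_mod rr) c p) = sc M c (eps (M, \<alpha>) p)"
    if pc: "p \<in> car (Psi_mod rr)" for c p
  proof -
    obtain g v where e: "p = (g, v)" by (cases p)
    note d = PCD[OF pc[unfolded e PXcar]]
    obtain N where N: "\<And>a. a \<ge> N \<Longrightarrow> g a = 0" using bound_ex[OF d(3)] by blast
    have N': "\<And>a. a \<ge> N \<Longrightarrow> sc M c (g a) = 0" using N kspace_sc0[OF ks] by simp
    have cc: "(\<lambda>a. sc M c (g a), sc M c v) \<in> car (Psi_mod rr)"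
      using kspaceD(4)[OF rmod_ks[OF R] pc] unfolding e PXsc psc_Pair .
    have sc_addh: "addh (car M) (sc M c)" using ks unfolding kspace_def addh_def by blast
    have yc: "\<And>a. (yo M ^^ a) (g a) \<in> car M" using rmod_ypow(2)[OF RM d(1)] .
    have "eps (M, \<alpha>) (sc (Psi_mod rr) c p) = sc M c v + (\<Sum>a<N. (yo M ^^ a) (sc M c (g a)))"
      unfolding e PXsc psc_Pair using eps_N[OF cc N'] .
    also have "\<dots> = sc M c v + (\<Sum>a<N. sc M c ((yo M ^^ a) (g a)))"
      using rmod_ypow_sc[OF RM d(1)] by simp
    also have "\<dots> = sc M c v + sc M c (\<Sum>a<N. (yo M ^^ a) (g a))"
      using addh_sum[where h="\<lambda>a. (yo M ^^ a) (g a)", OF GM sc_addh yc] by simp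
    also have "\<dots> = sc M c (v + (\<Sum>a<N. (yo M ^^ a) (g a)))"
      using kspaceD(5)[OF ks d(5) ysum_car[OF RM d(1)]] by simp
    also have "\<dots> = sc M c (eps (M, \<alpha>) p)" unfolding e using eps_N[OF pc[unfolded e] N] by simp
    finally show ?thesis .
  qed
  have cx: "eps (M, \<alpha>) (xo (Psi_mod rr) p) = xo M (eps (M, \<alpha>) p)" if pc: "p \<in> car (Psi_mod rr)" for p
  proof -
    obtain g v where e: "p = (g, v)" by (cases p)
    note d = PCD[OF pc[unfolded e PXcar]]
    obtain N where N: "\<And>a. a \<ge> N \<Longrightarrow> g a = 0" using bound_ex[OF d(3)] by blast
    have NS: "\<And>a. a \<ge> Suc N \<Longrightarrow> g a = 0" using N by simp
    have N': "\<And>a. a \<ge> N \<Longrightarrow> g (Suc a) = 0" using N by simp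
    have xc: "(\<lambda>a. g (Suc a), xo M v) \<in> car (Psi_mod rr)"
      using rmod_xc[OF R pc] unfolding e PXxo .
    have yc: "\<And>a. (yo M ^^ a) (g a) \<in> car M" using rmod_ypow(2)[OF RM d(1)] .
    have "xo M (eps (M, \<alpha>) p) = xo M (v + (\<Sum>a<Suc N. (yo M ^^ a) (g a)))"
      unfolding e using eps_N[OF pc[unfolded e] NS] by simp
    also have "\<dots> = xo M v + xo M (\<Sum>a<Suc N. (yo M ^^ a) (g a))"
      using addhD(1)[OF GM rmod_addhx[OF RM] d(5) ysum_car[OF RM d(1)]] .
    also have "xo M (\<Sum>a<Suc N. (yo M ^^ a) (g a)) = (\<Sum>a<Suc N. xo M ((yo M ^^ a) (g a)))"
      using addh_sum[where h="\<lambda>a. (yo M ^^ a) (g a)", OF GM rmod_addhx[OF RM] yc] .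
    also have "\<dots> = xo M (g 0) + (\<Sum>a<N. xo M ((yo M ^^ Suc a) (g (Suc a))))"
      by (subst sum.lessThan_Suc_shift) simp
    also have "\<dots> = (\<Sum>a<N. (yo M ^^ a) (g (Suc a)))"
      using d(2) xyS[OF d(1)] by simp
    finally have "xo M (eps (M, \<alpha>) p) = xo M v + (\<Sum>a<N. (yo M ^^ a) (g (Suc a)))" .
    moreover have "eps (M, \<alpha>) (xo (Psi_mod rr) p) = xo M v + (\<Sum>a<N. (yo M ^^ a) (g (Suc a)))"
      unfolding e PXxo using eps_N[OF xc N'] .
    ultimately show ?thesis by simp
  qed
  have cy: "eps (M, \<alpha>) (yo (Psi_mod rr) p) = yo M (eps (M, \<alpha>) p)" if pc: "p \<in> car (Psi_mod rr)" for p
  proof -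
    obtain g v where e: "p = (g, v)" by (cases p)
    note d = PCD[OF pc[unfolded e PXcar]]
    obtain N where N: "\<And>a. a \<ge> N \<Longrightarrow> g a = 0" using bound_ex[OF d(3)] by blast
    define g' where "g' = (\<lambda>a. if a = 0 then yo M v - PP M \<alpha> (yo M v) else g (a - 1))"
    have N': "\<And>a. a \<ge> Suc N \<Longrightarrow> g' a = 0" unfolding g'_def using N by simp
    have yy: "yo (Psi_mod rr) p = (g', PP M \<alpha> (yo M v))" unfolding e g'_def using PXyo[OF d(4)] .
    have ypc: "(g', PP M \<alpha> (yo M v)) \<in> car (Psi_mod rr)" using rmod_yc[OF R pc] unfolding yy .
    have vc: "yo M v \<in> car M" using rmod_yc[OF RM d(5)] .
    have pvc: "PP M \<alpha> (yo M v) \<in> car M" using P_car[OF W vc] .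
    have yc: "\<And>a. (yo M ^^ a) (g a) \<in> car M" using rmod_ypow(2)[OF RM d(1)] .
    have "eps (M, \<alpha>) (yo (Psi_mod rr) p) = PP M \<alpha> (yo M v) + (\<Sum>a<Suc N. (yo M ^^ a) (g' a))"
      unfolding yy using eps_N[OF ypc N'] .
    also have "(\<Sum>a<Suc N. (yo M ^^ a) (g' a)) = g' 0 + (\<Sum>a<N. (yo M ^^ Suc a) (g' (Suc a)))"
      by (subst sum.lessThan_Suc_shift) simp
    also have "\<dots> = (yo M v - PP M \<alpha> (yo M v)) + (\<Sum>a<N. yo M ((yo M ^^ a) (g a)))"
      unfolding g'_def by simp
    also have "(\<Sum>a<N. yo M ((yo M ^^ a) (g a))) = yo M (\<Sum>a<N. (yo M ^^ a) (g a))"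
      using addh_sum[where h="\<lambda>a. (yo M ^^ a) (g a)", OF GM rmod_addhy[OF RM] yc] by simp
    finally have "eps (M, \<alpha>) (yo (Psi_mod rr) p) = yo M v + yo M (\<Sum>a<N. (yo M ^^ a) (g a))"
      by simp
    also have "\<dots> = yo M (v + (\<Sum>a<N. (yo M ^^ a) (g a)))"
      using addhD(1)[OF GM rmod_addhy[OF RM] d(5) ysum_car[OF RM d(1)]] by simp
    also have "\<dots> = yo M (eps (M, \<alpha>) p)" unfolding e using eps_N[OF pc[unfolded e] N] by simp
    finally show ?thesis .
  qed
  show ?thesis unfolding rlin_def klin_def using eps_car add scl cx cy by blast
qed

end



lemma rlin_inv: assumes RM: "is_rmod M" and RN: "is_rmod N" and f: "rlin M N f"
  and gc: "\<And>b. b \<in> car N \<Longrightarrow> g b \<in> car M"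
  and gf: "\<And>a. a \<in> car M \<Longrightarrow> g (f a) = a" and fg: "\<And>b. b \<in> car N \<Longrightarrow> f (g b) = b"
  shows "rlin N M g"
proof -
  have G: "grp (car M)" using rmod_grp[OF RM] .
  have add: "g (a + b) = g a + g b" if "a \<in> car N" "b \<in> car N" for a b
  proof -
    have c: "g a \<in> car M" "g b \<in> car M" using gc that by blast+
    have "f (g a + g b) = a + b" using addhD(1)[OF G rlin_addh[OF f] c] fg that by simp
    then have "g (a + b) = g (f (g a + g b))" by simp
    then show ?thesis using gf[OF grpD(2)[OF G c]] by simp
  qed
  have scl: "g (sc N c b) = sc M c (g b)" if "b \<in> car N" for c b
  proof -
    have cb: "g b \<in> car M" using gc that by blast
    have "f (sc M c (g b)) = sc N c b" using rlin_sc[OF f cb] fg that by simp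
    then have "g (sc N c b) = g (f (sc M c (g b)))" by simp
    then show ?thesis using gf[OF rmod_scc[OF RM cb]] by simp
  qed
  have cx: "g (xo N b) = xo M (g b)" if "b \<in> car N" for b
  proof -
    have cb: "g b \<in> car M" using gc that by blast
    have "f (xo M (g b)) = xo N b" using rlin_x[OF f cb] fg that by simp
    then have "g (xo N b) = g (f (xo M (g b)))" by simp
    then show ?thesis using gf[OF rmod_xc[OF RM cb]] by simp
  qed
  have cy: "g (yo N b) = yo M (g b)" if "b \<in> car N" for b
  proof -
    have cb: "g b \<in> car M" using gc that by blast
    have "f (yo M (g b)) = yo N b" using rlin_y[OF f cb] fg that by simp
    then have "g (yo N b) = g (f (yo M (g b)))" by simp
    then show ?thesis using gf[OF rmod_yc[OF RM cb]] by simp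
  qed
  show ?thesis unfolding rlin_def klin_def using gc add scl cx cy by blast
qed

lemma F1_addh: assumes "is_rmod M" shows "addh (car M) (F1 M)"
  unfolding addh_def
proof (intro ballI)
  fix a b assume ab: "a \<in> car M" "b \<in> car M"
  have G: "grp (car M)" using rmod_grp[OF assms] .
  have x: "xo M (a + b) = xo M a + xo M b" using addhD(1)[OF G rmod_addhx[OF assms] ab] .
  have y: "yo M (xo M a + xo M b) = yo M (xo M a) + yo M (xo M b)"
    using addhD(1)[OF G rmod_addhy[OF assms] rmod_xc[OF assms ab(1)] rmod_xc[OF assms ab(2)]] .
  show "F1 M (a + b) = F1 M a + F1 M b" unfolding F1_def x y by (simp add: algebra_simps)
qed

lemma F1_0: assumes "is_rmod M" shows "F1 M 0 = 0"
  unfolding F1_def using rmod_x0[OF assms] rmod_y0[OF assms] by simp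

lemma F1_xy: assumes RM: "is_rmod M" and wc: "w \<in> car M" and wx: "xo M w = 0"
  shows "F1 M ((xo M ^^ b) ((yo M ^^ a) w)) = (if a = b then w else 0)"
proof (cases "b \<le> a")
  case True
  then have e: "(xo M ^^ b) ((yo M ^^ a) w) = (yo M ^^ (a - b)) w" using rmod_xpyp_le[OF RM wc] by blast
  show ?thesis
  proof (cases "a = b")
    case True
    then show ?thesis unfolding e F1_def using wx rmod_y0[OF RM] by simp
  next
    case False
    then obtain k where k: "a - b = Suc k" using \<open>b \<le> a\<close> by (metis Suc_diff_Suc le_neq_implies_less)
    have zc: "(yo M ^^ k) w \<in> car M" using rmod_ypow(2)[OF RM wc] .
    have "F1 M (yo M ((yo M ^^ k) w)) = 0" unfolding F1_def using rmod_xy[OF RM zc] by simp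
    then show ?thesis unfolding e k using False by simp
  qed
next
  case False
  then have e: "(xo M ^^ b) ((yo M ^^ a) w) = (xo M ^^ (b - a)) w" using rmod_xpyp_gt[OF RM wc] by simp
  obtain k where k: "b - a = Suc k" using False by (metis Suc_diff_Suc not_le)
  have "(xo M ^^ Suc k) w = (xo M ^^ k) (xo M w)" by (simp add: funpow_swap1)
  then have "(xo M ^^ Suc k) w = 0" using wx rmod_xpow0[OF RM] by simp
  then show ?thesis unfolding e k using False F1_0[OF RM] by auto
qed

definition dlt :: "('k::field, 'm::ab_group_add) cob \<Rightarrow> 'm \<Rightarrow> (nat \<Rightarrow> 'm) \<times> 'm" where
  "dlt A m = (\<lambda>a. F1 (fst A) ((xo (fst A) ^^ a) (m - PP (fst A) (snd A) m)), PP (fst A) (snd A) m)"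

context
  fixes M :: "('k::field, 'm::ab_group_add) rmod" and \<alpha>
  assumes W: "wsp M \<alpha>"
begin

lemma dlt_props: assumes mc: "m \<in> car M"
  obtains K where "dlt (M, \<alpha>) m \<in> car (Psi_mod (Xi (M, \<alpha>)))"
    "\<And>a. a \<ge> K \<Longrightarrow> fst (dlt (M, \<alpha>) m) a = 0"
    "(xo M ^^ K) (m - PP M \<alpha> m) = 0" "m - PP M \<alpha> m \<in> car M"
proof -
  have R: "is_rmod M" using RM[OF W] .
  define n where "n = m - PP M \<alpha> m"
  have nI: "n \<in> IM M" unfolding n_def using decomp_ex(1)[OF W mc] .
  obtain K where K: "(xo M ^^ K) n = 0" "n \<in> car M" using nilD[of n M] nI IM_nil[OF R] by blast
  have z: "(xo M ^^ a) n = 0" if "a \<ge> K" for a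
  proof -
    have "(xo M ^^ a) = (xo M ^^ (a - K)) \<circ> (xo M ^^ K)" using that funpow_add[of "a - K" K "xo M"] by simp
    then show ?thesis using K(1) rmod_xpow0[OF R] by simp
  qed
  have bnd: "fst (dlt (M, \<alpha>) m) a = 0" if "a \<ge> K" for a
    unfolding dlt_def fst_conv snd_conv n_def[symmetric] using z[OF that] F1_0[OF R] by simp
  have "(\<forall>a. F1 M ((xo M ^^ a) n) \<in> {m \<in> car M. xo M m = 0})"
    using F1_car[OF R rmod_xpow(2)[OF R K(2)]] F1_x[OF R rmod_xpow(2)[OF R K(2)]] by blast
  moreover have "finite {a. F1 M ((xo M ^^ a) n) \<noteq> 0}"
  proof (rule finite_subset[of _ "{..<K}"])
    show "{a. F1 M ((xo M ^^ a) n) \<noteq> 0} \<subseteq> {..<K}"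
    proof
      fix a assume "a \<in> {a. F1 M ((xo M ^^ a) n) \<noteq> 0}"
      then have "\<not> a \<ge> K" using z F1_0[OF R] by auto
      then show "a \<in> {..<K}" by simp
    qed
  qed simp
  moreover have "PP M \<alpha> m \<in> imal M \<alpha>" unfolding imal_eq using mc by blast
  ultimately have "dlt (M, \<alpha>) m \<in> PC {m \<in> car M. xo M m = 0} (imal M \<alpha>)"
    unfolding dlt_def fst_conv snd_conv n_def[symmetric] PC_iff by blast
  then have "dlt (M, \<alpha>) m \<in> car (Psi_mod (Xi (M, \<alpha>)))" unfolding PXcar[OF W] .
  then show ?thesis using that bnd K(1,2) unfolding n_def by blast
qed

lemma eps_dlt: assumes mc: "m \<in> car M" shows "eps (M, \<alpha>) (dlt (M, \<alpha>) m) = m"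
proof -
  have R: "is_rmod M" using RM[OF W] .
  obtain K where K: "dlt (M, \<alpha>) m \<in> car (Psi_mod (Xi (M, \<alpha>)))"
    "\<And>a. a \<ge> K \<Longrightarrow> fst (dlt (M, \<alpha>) m) a = 0"
    "(xo M ^^ K) (m - PP M \<alpha> m) = 0" "m - PP M \<alpha> m \<in> car M"
    using dlt_props[OF mc] by blast
  define n where "n = m - PP M \<alpha> m"
  have d: "dlt (M, \<alpha>) m = (\<lambda>a. F1 M ((xo M ^^ a) n), PP M \<alpha> m)" unfolding dlt_def n_def by simp
  have K2: "\<And>a. a \<ge> K \<Longrightarrow> F1 M ((xo M ^^ a) n) = 0" using K(2) unfolding d by simp
  have "eps (M, \<alpha>) (dlt (M, \<alpha>) m) = PP M \<alpha> m + (\<Sum>a<K. (yo M ^^ a) (F1 M ((xo M ^^ a) n)))"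
    using eps_N[OF W K(1)[unfolded d] K2] unfolding d .
  also have "(\<Sum>a<K. (yo M ^^ a) (F1 M ((xo M ^^ a) n))) = n"
    using telescope[OF R K(4)[folded n_def], of K] K(3)[folded n_def] rmod_ypow0[OF R] by simp
  finally show ?thesis unfolding n_def by simp
qed

lemma dlt_eps: assumes pc: "p \<in> car (Psi_mod (Xi (M, \<alpha>)))" shows "dlt (M, \<alpha>) (eps (M, \<alpha>) p) = p"
proof -
  have R: "is_rmod M" using RM[OF W] .
  have G: "grp (car M)" using rmod_grp[OF R] .
  obtain g v where e: "p = (g, v)" by (cases p)
  note d = PCD[OF W pc[unfolded e PXcar[OF W]]]
  obtain N where N: "\<And>a. a \<ge> N \<Longrightarrow> g a = 0" using bound_ex[OF d(3)] by blast
  define s where "s = (\<Sum>a<N. (yo M ^^ a) (g a))"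
  have ep: "eps (M, \<alpha>) p = v + s" unfolding e s_def using eps_N[OF W pc[unfolded e] N] .
  have sc: "s \<in> car M" unfolding s_def using ysum_car[OF R d(1)] .
  have gn: "g a \<in> nil M" for a using nilI[of "g a" M 1] d(1,2) by simp
  have yn: "(yo M ^^ k) w \<in> nil M" if "w \<in> nil M" for w k
  proof (induction k)
    case 0 then show ?case using that by simp
  next
    case (Suc k) then show ?case using nil_y[OF R] by simp
  qed
  have sI: "s \<in> IM M" unfolding s_def IM_nil[OF R]
    by (rule grp_sum[OF nil_grp[OF R]], rule yn[OF gn])
  have Pe: "PP M \<alpha> (v + s) = v"
    using P_add[OF W d(5) sc] imal_P[OF W d(4)] P_IM[OF W sI] by simp
  have e2: "v + s - PP M \<alpha> (v + s) = s" using Pe by simp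
  have Fb: "F1 M ((xo M ^^ b) s) = g b" for b
  proof -
    have yc: "\<And>a. (yo M ^^ a) (g a) \<in> car M" using rmod_ypow(2)[OF R d(1)] .
    have "(xo M ^^ b) s = (\<Sum>a<N. (xo M ^^ b) ((yo M ^^ a) (g a)))"
      unfolding s_def by (rule addh_sum[OF G rmod_xpow(1)[OF R]], rule yc)
    moreover have "\<And>a. (xo M ^^ b) ((yo M ^^ a) (g a)) \<in> car M" using rmod_xpow(2)[OF R yc] .
    ultimately have "F1 M ((xo M ^^ b) s) = (\<Sum>a<N. F1 M ((xo M ^^ b) ((yo M ^^ a) (g a))))"
      using addh_sum[where h="\<lambda>a. (xo M ^^ b) ((yo M ^^ a) (g a))", OF G F1_addh[OF R]] by simp
    also have "\<dots> = (\<Sum>a<N. if a = b then g a else 0)" using F1_xy[OF R d(1) d(2)] by simp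
    also have "\<dots> = (if b \<in> {..<N} then g b else 0)" using sum.delta[of "{..<N}" b g] by simp
    also have "\<dots> = g b" using N[of b] by auto
    finally show ?thesis .
  qed
  show ?thesis unfolding dlt_def fst_conv snd_conv ep e2 Pe using Fb e by (simp add: fun_eq_iff)
qed

lemma eps_ciso: "ciso (Psi (Xi (M, \<alpha>))) (M, \<alpha>) (eps (M, \<alpha>))"
proof -
  have R: "is_rmod M" using RM[OF W] .
  have D: "drep (Xi (M, \<alpha>))" using DR[OF W] .
  have R2: "is_rmod (Psi_mod (Xi (M, \<alpha>)))" using PX_rmod[OF W] .
  have rl: "rlin (Psi_mod (Xi (M, \<alpha>))) M (eps (M, \<alpha>))" using eps_rlin[OF W] .
  have dc: "\<And>m. m \<in> car M \<Longrightarrow> dlt (M, \<alpha>) m \<in> car (Psi_mod (Xi (M, \<alpha>)))"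
    using dlt_props by metis
  have rl2: "rlin M (Psi_mod (Xi (M, \<alpha>))) (dlt (M, \<alpha>))"
    using rlin_inv[OF R2 R rl dc dlt_eps eps_dlt] .
  have imP: "imal (Psi_mod (Xi (M, \<alpha>))) Psi_alpha = {(0, v) |v. v \<in> imal M \<alpha>}"
    unfolding imal_Psi[OF D] Xi_simps ..
  have i1: "eps (M, \<alpha>) ` imal (Psi_mod (Xi (M, \<alpha>))) Psi_alpha \<subseteq> imal M \<alpha>"
    unfolding imP eps_def by auto
  have i2: "dlt (M, \<alpha>) ` imal M \<alpha> \<subseteq> imal (Psi_mod (Xi (M, \<alpha>))) Psi_alpha"
  proof
    fix q assume "q \<in> dlt (M, \<alpha>) ` imal M \<alpha>"
    then obtain w where w: "w \<in> imal M \<alpha>" "q = dlt (M, \<alpha>) w" by blast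
    have "q = (0, w)" unfolding w(2) dlt_def fst_conv snd_conv imal_P[OF W w(1)]
      using rmod_xpow0[OF R] F1_0[OF R] by (simp add: fun_eq_iff)
    then show "q \<in> imal (Psi_mod (Xi (M, \<alpha>))) Psi_alpha" unfolding imP using w(1) by blast
  qed
  have c1: "cmor (Psi (Xi (M, \<alpha>))) (M, \<alpha>) (eps (M, \<alpha>))"
    unfolding cmor_def Psi_def using rl i1 by simp
  have c2: "cmor (M, \<alpha>) (Psi (Xi (M, \<alpha>))) (dlt (M, \<alpha>))"
    unfolding cmor_def Psi_def using rl2 i2 by simp
  show ?thesis unfolding ciso_def
    using c1 c2 dlt_eps eps_dlt unfolding Psi_def by auto
qed

end

lemma eps_nat: assumes WA: "wsp M \<alpha>" and WB: "wsp N \<beta>" and f: "cmor (M, \<alpha>) (N, \<beta>) f"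
  and pc: "p \<in> car (Psi_mod (Xi (M, \<alpha>)))"
  shows "f (eps (M, \<alpha>) p) = eps (N, \<beta>) (PsiM (XiM f) p)"
proof -
  have RM: "is_rmod M" using wsp_rmod[OF WA] .
  have RN: "is_rmod N" using wsp_rmod[OF WB] .
  have G: "grp (car M)" using rmod_grp[OF RM] .
  have rl: "rlin M N f" using f unfolding cmor_def by simp
  obtain g v where e: "p = (g, v)" by (cases p)
  note d = PCD[OF WA pc[unfolded e PXcar[OF WA]]]
  obtain K where K: "\<And>a. a \<ge> K \<Longrightarrow> g a = 0" using bound_ex[OF d(3)] by blast
  have yc: "\<And>a. (yo M ^^ a) (g a) \<in> car M" using rmod_ypow(2)[OF RM d(1)] .
  have fgc: "\<And>a. (f \<circ> g) a \<in> car N" using rlin_car[OF rl d(1)] by simp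
  have fK: "\<And>a. a \<ge> K \<Longrightarrow> (f \<circ> g) a = 0" using K rlin_0[OF RM rl] by simp
  have "f (eps (M, \<alpha>) p) = f (v + (\<Sum>a<K. (yo M ^^ a) (g a)))"
    unfolding e using eps_N[OF WA pc[unfolded e] K] by simp
  also have "\<dots> = f v + f (\<Sum>a<K. (yo M ^^ a) (g a))"
    using addhD(1)[OF G rlin_addh[OF rl] d(5) ysum_car[OF RM d(1)]] .
  also have "f (\<Sum>a<K. (yo M ^^ a) (g a)) = (\<Sum>a<K. f ((yo M ^^ a) (g a)))"
    by (rule addh_sum[OF G rlin_addh[OF rl]], rule yc)
  also have "\<dots> = (\<Sum>a<K. (yo N ^^ a) ((f \<circ> g) a))" using rlin_ypow[OF RM rl d(1)] by simp
  also have "f v + \<dots> = eps (N, \<beta>) (f \<circ> g, f v)" using eps_lt[where g="f \<circ> g" and N=K and v="f v" and \<alpha>=\<beta>, OF RN fgc fK] by simp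
  finally show ?thesis unfolding e XiM_def PsiM_Pair by simp
qed


theorem theorem6:
  shows
  \<comment> \<open>Psi is a functor D -> C\<close>
  "(\<forall>r :: ('k::field, 'u::ab_group_add, 'v::ab_group_add) rep. drep r \<longrightarrow> cobj (Psi r))
   \<and> (\<forall>(r :: ('k, 'u, 'v) rep) (s :: ('k, 'u2::ab_group_add, 'v2::ab_group_add) rep) f.
        drep r \<and> drep s \<and> dmor r s f \<longrightarrow> cmor (Psi r) (Psi s) (PsiM f))
   \<and> (\<forall>r :: ('k, 'u, 'v) rep. drep r \<longrightarrow>
        (\<forall>p\<in>car (fst (Psi r)). PsiM (id :: 'u \<Rightarrow> 'u, id :: 'v \<Rightarrow> 'v) p = p))
   \<and> (\<forall>(r :: ('k, 'u, 'v) rep) (s :: ('k, 'u2, 'v2) rep)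
        (t :: ('k, 'u3::ab_group_add, 'v3::ab_group_add) rep) f g.
        drep r \<and> drep s \<and> drep t \<and> dmor r s f \<and> dmor s t g \<longrightarrow>
        (\<forall>p\<in>car (fst (Psi r)).
           PsiM (fst g \<circ> fst f, snd g \<circ> snd f) p = PsiM g (PsiM f p)))
  \<comment> \<open>Xi is a functor C -> D\<close>
   \<and> (\<forall>A :: ('k, 'm::ab_group_add) cob. cobj A \<longrightarrow> drep (Xi A))
   \<and> (\<forall>(A :: ('k, 'm) cob) (B :: ('k, 'n::ab_group_add) cob) f.
        cobj A \<and> cobj B \<and> cmor A B f \<longrightarrow> dmor (Xi A) (Xi B) (XiM f))
   \<and> (\<forall>A :: ('k, 'm) cob. cobj A \<longrightarrow>
        (\<forall>a\<in>Mu (Xi A). fst (XiM (id :: 'm \<Rightarrow> 'm)) a = a) \<and> (\<forall>a\<in>Mv (Xi A). snd (XiM (id :: 'm \<Rightarrow> 'm)) a = a))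
   \<and> (\<forall>(A :: ('k, 'm) cob) (B :: ('k, 'n) cob) (C :: ('k, 'p::ab_group_add) cob) f g.
        cobj A \<and> cobj B \<and> cobj C \<and> cmor A B f \<and> cmor B C g \<longrightarrow>
        (\<forall>a\<in>Mu (Xi A). fst (XiM (g \<circ> f)) a = fst (XiM g) (fst (XiM f) a))
        \<and> (\<forall>a\<in>Mv (Xi A). snd (XiM (g \<circ> f)) a = snd (XiM g) (snd (XiM f) a)))
  \<comment> \<open>natural isomorphism Id_D => Xi o Psi\<close>
   \<and> (\<exists>(\<eta>1 :: ('k, 'u, 'v) rep \<Rightarrow> ('u \<Rightarrow> (nat \<Rightarrow> 'u) \<times> 'v) \<times> ('v \<Rightarrow> (nat \<Rightarrow> 'u) \<times> 'v))
       (\<eta>2 :: ('k, 'u2, 'v2) rep \<Rightarrow> ('u2 \<Rightarrow> (nat \<Rightarrow> 'u2) \<times> 'v2) \<times> ('v2 \<Rightarrow> (nat \<Rightarrow> 'u2) \<times> 'v2)).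
        (\<forall>r. drep r \<longrightarrow> diso r (Xi (Psi r)) (\<eta>1 r))
        \<and> (\<forall>s. drep s \<longrightarrow> diso s (Xi (Psi s)) (\<eta>2 s))
        \<and> (\<forall>r s f. drep r \<and> drep s \<and> dmor r s f \<longrightarrow>
             (\<forall>a\<in>Mu r. fst (XiM (PsiM f)) (fst (\<eta>1 r) a) = fst (\<eta>2 s) (fst f a))
             \<and> (\<forall>a\<in>Mv r. snd (XiM (PsiM f)) (snd (\<eta>1 r) a) = snd (\<eta>2 s) (snd f a))))
  \<comment> \<open>natural isomorphism Psi o Xi => Id_C\<close>
   \<and> (\<exists>(\<epsilon>1 :: ('k, 'm) cob \<Rightarrow> (nat \<Rightarrow> 'm) \<times> 'm \<Rightarrow> 'm)
       (\<epsilon>2 :: ('k, 'n) cob \<Rightarrow> (nat \<Rightarrow> 'n) \<times> 'n \<Rightarrow> 'n).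
        (\<forall>A. cobj A \<longrightarrow> ciso (Psi (Xi A)) A (\<epsilon>1 A))
        \<and> (\<forall>B. cobj B \<longrightarrow> ciso (Psi (Xi B)) B (\<epsilon>2 B))
        \<and> (\<forall>A B f. cobj A \<and> cobj B \<and> cmor A B f \<longrightarrow>
             (\<forall>p\<in>car (fst (Psi (Xi A))). f (\<epsilon>1 A p) = \<epsilon>2 B (PsiM (XiM f) p))))"
  proof -
  have c1: "\<forall>r :: ('k::field, 'u::ab_group_add, 'v::ab_group_add) rep. drep r \<longrightarrow> cobj (Psi r)"
    using cobj_Psi by blast
  have c2: "\<forall>(r :: ('k, 'u, 'v) rep) (s :: ('k, 'u2::ab_group_add, 'v2::ab_group_add) rep) f.
        drep r \<and> drep s \<and> dmor r s f \<longrightarrow> cmor (Psi r) (Psi s) (PsiM f)"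
    using cmor_PsiM by blast
  have c3: "\<forall>r :: ('k, 'u, 'v) rep. drep r \<longrightarrow>
        (\<forall>p\<in>car (fst (Psi r)). PsiM (id :: 'u \<Rightarrow> 'u, id :: 'v \<Rightarrow> 'v) p = p)"
  proof (intro allI impI ballI)
    fix r :: "('k, 'u, 'v) rep" and p :: "(nat \<Rightarrow> 'u) \<times> 'v"
    show "PsiM (id :: 'u \<Rightarrow> 'u, id :: 'v \<Rightarrow> 'v) p = p" by (cases p) (simp add: PsiM_Pair)
  qed
  have c4: "\<forall>(r :: ('k, 'u, 'v) rep) (s :: ('k, 'u2, 'v2) rep)
        (t :: ('k, 'u3::ab_group_add, 'v3::ab_group_add) rep) f g.
        drep r \<and> drep s \<and> drep t \<and> dmor r s f \<and> dmor s t g \<longrightarrow>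
        (\<forall>p\<in>car (fst (Psi r)).
           PsiM (fst g \<circ> fst f, snd g \<circ> snd f) p = PsiM g (PsiM f p))"
  proof (intro allI impI ballI)
    fix p :: "(nat \<Rightarrow> 'u) \<times> 'v" and f :: "('u \<Rightarrow> 'u2) \<times> ('v \<Rightarrow> 'v2)" and g :: "('u2 \<Rightarrow> 'u3) \<times> ('v2 \<Rightarrow> 'v3)"
    show "PsiM (fst g \<circ> fst f, snd g \<circ> snd f) p = PsiM g (PsiM f p)"
      by (cases p) (simp add: PsiM_Pair comp_def)
  qed
  have c5: "\<forall>A :: ('k, 'm::ab_group_add) cob. cobj A \<longrightarrow> drep (Xi A)"
  proof (intro allI impI)
    fix A :: "('k, 'm) cob" assume "cobj A"
    then show "drep (Xi A)" using drep_Xi[of "fst A" "snd A"] unfolding cobj_def by simp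
  qed
  have c6: "\<forall>(A :: ('k, 'm) cob) (B :: ('k, 'n::ab_group_add) cob) f.
        cobj A \<and> cobj B \<and> cmor A B f \<longrightarrow> dmor (Xi A) (Xi B) (XiM f)"
  proof (intro allI impI)
    fix A :: "('k, 'm) cob" and B :: "('k, 'n) cob" and f
    assume h: "cobj A \<and> cobj B \<and> cmor A B f"
    show "dmor (Xi A) (Xi B) (XiM f)"
      using dmor_Xi[of "fst A" "snd A" "fst B" "snd B" f] h unfolding cobj_def XiM_def by simp
  qed
  have c7: "\<forall>A :: ('k, 'm) cob. cobj A \<longrightarrow>
        (\<forall>a\<in>Mu (Xi A). fst (XiM (id :: 'm \<Rightarrow> 'm)) a = a) \<and> (\<forall>a\<in>Mv (Xi A). snd (XiM (id :: 'm \<Rightarrow> 'm)) a = a)"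
    unfolding XiM_def by simp
  have c8: "\<forall>(A :: ('k, 'm) cob) (B :: ('k, 'n) cob) (C :: ('k, 'p::ab_group_add) cob) f g.
        cobj A \<and> cobj B \<and> cobj C \<and> cmor A B f \<and> cmor B C g \<longrightarrow>
        (\<forall>a\<in>Mu (Xi A). fst (XiM (g \<circ> f)) a = fst (XiM g) (fst (XiM f) a))
        \<and> (\<forall>a\<in>Mv (Xi A). snd (XiM (g \<circ> f)) a = snd (XiM g) (snd (XiM f) a))"
    unfolding XiM_def by simp
  have c9: "\<exists>(\<eta>1 :: ('k, 'u, 'v) rep \<Rightarrow> ('u \<Rightarrow> (nat \<Rightarrow> 'u) \<times> 'v) \<times> ('v \<Rightarrow> (nat \<Rightarrow> 'u) \<times> 'v))
       (\<eta>2 :: ('k, 'u2, 'v2) rep \<Rightarrow> ('u2 \<Rightarrow> (nat \<Rightarrow> 'u2) \<times> 'v2) \<times> ('v2 \<Rightarrow> (nat \<Rightarrow> 'u2) \<times> 'v2)).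
        (\<forall>r. drep r \<longrightarrow> diso r (Xi (Psi r)) (\<eta>1 r))
        \<and> (\<forall>s. drep s \<longrightarrow> diso s (Xi (Psi s)) (\<eta>2 s))
        \<and> (\<forall>r s f. drep r \<and> drep s \<and> dmor r s f \<longrightarrow>
             (\<forall>a\<in>Mu r. fst (XiM (PsiM f)) (fst (\<eta>1 r) a) = fst (\<eta>2 s) (fst f a))
             \<and> (\<forall>a\<in>Mv r. snd (XiM (PsiM f)) (snd (\<eta>1 r) a) = snd (\<eta>2 s) (snd f a)))"
  proof (rule exI[of _ eta], rule exI[of _ eta], intro conjI allI impI)
    fix r :: "('k, 'u, 'v) rep" assume "drep r"
    then show "diso r (Xi (Psi r)) (eta r)" by (rule eta_diso)
  next
    fix s :: "('k, 'u2, 'v2) rep" assume "drep s"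
    then show "diso s (Xi (Psi s)) (eta s)" by (rule eta_diso)
  next
    fix r :: "('k, 'u, 'v) rep" and s :: "('k, 'u2, 'v2) rep" and f
    assume h: "drep r \<and> drep s \<and> dmor r s f"
    then show "\<forall>a\<in>Mu r. fst (XiM (PsiM f)) (fst (eta r) a) = fst (eta s) (fst f a)"
      using eta_nat[of r s f] by blast
    show "\<forall>a\<in>Mv r. snd (XiM (PsiM f)) (snd (eta r) a) = snd (eta s) (snd f a)"
      using h eta_nat[of r s f] by blast
  qed
  have c10: "\<exists>(\<epsilon>1 :: ('k, 'm) cob \<Rightarrow> (nat \<Rightarrow> 'm) \<times> 'm \<Rightarrow> 'm)
       (\<epsilon>2 :: ('k, 'n) cob \<Rightarrow> (nat \<Rightarrow> 'n) \<times> 'n \<Rightarrow> 'n).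
        (\<forall>A. cobj A \<longrightarrow> ciso (Psi (Xi A)) A (\<epsilon>1 A))
        \<and> (\<forall>B. cobj B \<longrightarrow> ciso (Psi (Xi B)) B (\<epsilon>2 B))
        \<and> (\<forall>A B f. cobj A \<and> cobj B \<and> cmor A B f \<longrightarrow>
             (\<forall>p\<in>car (fst (Psi (Xi A))). f (\<epsilon>1 A p) = \<epsilon>2 B (PsiM (XiM f) p)))"
  proof (rule exI[of _ eps], rule exI[of _ eps], intro conjI allI impI ballI)
    fix A :: "('k, 'm) cob" assume "cobj A"
    then show "ciso (Psi (Xi A)) A (eps A)" using eps_ciso[of "fst A" "snd A"] unfolding cobj_def by simp
  next
    fix B :: "('k, 'n) cob" assume "cobj B"
    then show "ciso (Psi (Xi B)) B (eps B)" using eps_ciso[of "fst B" "snd B"] unfolding cobj_def by simp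
  next
    fix A :: "('k, 'm) cob" and B :: "('k, 'n) cob" and f p
    assume h: "cobj A \<and> cobj B \<and> cmor A B f" and p: "p \<in> car (fst (Psi (Xi A)))"
    show "f (eps A p) = eps B (PsiM (XiM f) p)"
      using eps_nat[of "fst A" "snd A" "fst B" "snd B" f p] h p unfolding cobj_def Psi_def by simp
  qed
  show ?thesis using c1 c2 c3 c4 c5 c6 c7 c8 c9 c10 by blast
qed

end
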